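(* In the optimal stopping setting described in the context, under (S1)–(S4), on the set $\mathcal R$ the topology $\tau_p\otimes\bar\tau_p$ is contained in (i.e. is coarser than) the topology $\tau_p\otimes\tilde\tau_p$. In other words, on $\mathcal R$ convergence of the flow of measures in measure implies its convergence in the stable topology.
   Context: Fix $T>0$, an open set $\mathcal O\subseteq\mathbb R$ with closure $\bar{\mathcal O}$, and constants $r\in[0,2]$, $q\ge 2$ and $p$ with $q>p\ge\max(1,r)$. For a metric space $E$, $\mathcal P_p(E)$ (resp. $\mathcal P^{sub}_p(E)$) is the set of Borel probability (resp. subprobability) measures with finite $p$-th moment, with topology $\tau_p$: convergence against continuous test functions of growth at most $C(1+d(x,x_0)^p)$. $V_p$ is the set of families $m=(m_t)_{t\in[0,T]}$ of subprobability measures on $\bar{\mathcal O}$ with $t\mapsto m_t(B)$ measurable for Borel $B$ and $\int_0^T\int|x|^pm_t(dx)dt<\infty$, identified if equal for a.e. $t$. On $V_p$: $\bar\tau_p$ is the stable topology with $p$-growth, in which $m^n\to m$ iff $\int_0^T\int\phi(t,x)m^n_t(dx)dt\to\int_0^T\int\phi(t,x)m_t(dx)dt$ for all $\phi$ jointly measurable, continuous in $x$ for each $t$ and with $|\phi(t,x)|\le C(1+|x|^p)$; $\tilde\tau_p$ is the topology of convergence in Lebesgue measure of $t\mapsto m_t$ as maps into $(\mathcal P^{sub}_p(\bar{\mathcal O}),\tau_p)$. $\mathcal P_p([0,T]\times\bar{\mathcal O})$ carries $\tau_p$. (S1) $m_0^*\in\mathcal P_q(\bar{\mathcal O})$. (S2)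 $b,\sigma:[0,T]\times\mathbb R\to\mathbb R$ jointly measurable, continuous in $x$, with $|b(t,x)-b(t,y)|+|\sigma(t,x)-\sigma(t,y)|\le c_1|x-y|$, $|b(t,x)|\le c_1(1+|x|)$, $\sigma^2(t,x)\le c_1(1+|x|^r)$. (S3) (reward functions, irrelevant here) $f$, $g$ measurable/continuous with $p$-growth. (S4) Either (a) $\mathbb P(\tau^X_{\mathcal O}\ge T)=1$ where $X$ solves $dX_t=b(t,X_t)dt+\sigma(t,X_t)dW_t$, $X_0\sim m_0^*$, $\tau^X_{\mathcal O}=\inf\{t:X_t\notin\mathcal O\}$; or (b) $\mathcal O$ is a bounded open interval and $\sigma^2\ge c_\sigma>0$. $\mathcal R$ is the set of $(\mu,m)\in\mathcal P_p([0,T]\times\bar{\mathcal O})\times V_p$ with $\int u\,d\mu=\int_{\mathcal O}u(0,x)m_0^*(dx)+\int_0^T\int_{\bar{\mathcal O}}(\partial_tu+b\partial_xu+\tfrac{\sigma^2}{2}\partial_{xx}u)(t,x)m_t(dx)dt$ for all $u\in C^{1,2}_b([0,T]\times\bar{\mathcal O})$. *)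

theory Defs
  imports "HOL-Probability.Probability"
begin

text \<open>x^a for x \<ge> 0 with the convention 0^0 = 1 (Isabelle's powr has 0 powr 0 = 0).\<close>
definition mpow :: "real \<Rightarrow> real \<Rightarrow> real" where
  "mpow x a = (if a = 0 then 1 else x powr a)"

definition subprob_on :: "real set \<Rightarrow> real measure \<Rightarrow> bool" where
  "subprob_on S \<nu> \<longleftrightarrow> sets \<nu> = sets borel \<and> emeasure \<nu> UNIV \<le> 1 \<and> emeasure \<nu> (UNIV - S) = 0"

definition Pp_time_space :: "real \<Rightarrow> real \<Rightarrow> real set \<Rightarrow> (real \<times> real) measure \<Rightarrow> bool" where
  "Pp_time_space p T S \<mu> \<longleftrightarrow> prob_space \<mu> \<and> sets \<mu> = sets borel
     \<and> emeasure \<mu> (UNIV - ({0..T} \<times> S)) = 0 \<and> integrable \<mu> (\<lambda>z. norm z powr p)"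

definition conv_tau_p :: "real \<Rightarrow> 'a::real_normed_vector set \<Rightarrow> (nat \<Rightarrow> 'a measure) \<Rightarrow> 'a measure \<Rightarrow> bool" where
  "conv_tau_p p E \<nu>s \<nu> \<longleftrightarrow>
     (\<forall>(\<phi>::'a \<Rightarrow> real) C. continuous_on E \<phi> \<and> (\<forall>z\<in>E. \<bar>\<phi> z\<bar> \<le> C * (1 + norm z powr p)) \<longrightarrow>
        (\<lambda>n. LINT z:E|\<nu>s n. \<phi> z) \<longlonglongrightarrow> (LINT z:E|\<nu>. \<phi> z))"

definition Vp :: "real \<Rightarrow> real \<Rightarrow> real set \<Rightarrow> (real \<Rightarrow> real measure) \<Rightarrow> bool" where
  "Vp p T S m \<longleftrightarrow> (\<forall>t\<in>{0..T}. subprob_on S (m t))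
     \<and> (\<forall>B\<in>sets borel. (\<lambda>t. emeasure (m t) B) \<in> borel_measurable (restrict_space borel {0..T}))
     \<and> (\<integral>\<^sup>+ t. indicator {0..T} t * (\<integral>\<^sup>+ x. ennreal (\<bar>x\<bar> powr p) \<partial>(m t)) \<partial>lborel) < \<infinity>"

definition conv_stable :: "real \<Rightarrow> real \<Rightarrow> real set \<Rightarrow> (nat \<Rightarrow> real \<Rightarrow> real measure) \<Rightarrow> (real \<Rightarrow> real measure) \<Rightarrow> bool" where
  "conv_stable p T S ms m \<longleftrightarrow>
     (\<forall>(\<phi>::real \<times> real \<Rightarrow> real) C.
        \<phi> \<in> borel_measurable (restrict_space borel ({0..T} \<times> S))
        \<and> (\<forall>t\<in>{0..T}. continuous_on S (\<lambda>x. \<phi> (t, x)))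
        \<and> (\<forall>t\<in>{0..T}. \<forall>x\<in>S. \<bar>\<phi> (t, x)\<bar> \<le> C * (1 + \<bar>x\<bar> powr p)) \<longrightarrow>
        (\<lambda>n. LINT t:{0..T}|lborel. (LINT x:S|ms n t. \<phi> (t, x)))
          \<longlonglongrightarrow> (LINT t:{0..T}|lborel. (LINT x:S|m t. \<phi> (t, x))))"

text \<open>Sequential convergence in tilde-tau_p: convergence in Lebesgue measure on [0,T]
  of t \<mapsto> m_t as maps into the metrizable space (P^sub_p(S), tau_p).  On a finite
  measure space and a metrizable target this is expressed by the (metric-independent)
  criterion: every subsequence has a further subsequence converging for a.e. t.\<close>
definition conv_in_measure :: "real \<Rightarrow> real \<Rightarrow> real set \<Rightarrow> (nat \<Rightarrow> real \<Rightarrow> real measure) \<Rightarrow> (real \<Rightarrow> real measure) \<Rightarrow> bool" where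
  "conv_in_measure p T S ms m \<longleftrightarrow>
     (\<forall>r::nat \<Rightarrow> nat. strict_mono r \<longrightarrow>
        (\<exists>r'::nat \<Rightarrow> nat. strict_mono r' \<and>
           (AE t in lborel. t \<in> {0..T} \<longrightarrow> conv_tau_p p S (\<lambda>k. ms (r (r' k)) t) (m t))))"

definition C12b :: "real \<Rightarrow> real set \<Rightarrow> (real \<times> real \<Rightarrow> real) \<Rightarrow> (real \<times> real \<Rightarrow> real)
    \<Rightarrow> (real \<times> real \<Rightarrow> real) \<Rightarrow> (real \<times> real \<Rightarrow> real) \<Rightarrow> bool" where
  "C12b T S u ut ux uxx \<longleftrightarrow>
     (\<forall>t\<in>{0..T}. \<forall>x\<in>S.
        ((\<lambda>s. u (s, x)) has_real_derivative ut (t, x)) (at t within {0..T})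
      \<and> ((\<lambda>y. u (t, y)) has_real_derivative ux (t, x)) (at x within S)
      \<and> ((\<lambda>y. ux (t, y)) has_real_derivative uxx (t, x)) (at x within S))
   \<and> continuous_on ({0..T} \<times> S) u \<and> continuous_on ({0..T} \<times> S) ut
   \<and> continuous_on ({0..T} \<times> S) ux \<and> continuous_on ({0..T} \<times> S) uxx
   \<and> bounded (u ` ({0..T} \<times> S)) \<and> bounded (ut ` ({0..T} \<times> S))
   \<and> bounded (ux ` ({0..T} \<times> S)) \<and> bounded (uxx ` ({0..T} \<times> S))"

definition inR :: "real \<Rightarrow> real \<Rightarrow> real set \<Rightarrow> real measure \<Rightarrow> (real \<Rightarrow> real \<Rightarrow> real)
    \<Rightarrow> (real \<Rightarrow> real \<Rightarrow> real) \<Rightarrow> (real \<times> real) measure \<Rightarrow> (real \<Rightarrow> real measure) \<Rightarrow> bool" where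
  "inR p T Ob m0 b \<sigma> \<mu> m \<longleftrightarrow> Pp_time_space p T (closure Ob) \<mu> \<and> Vp p T (closure Ob) m \<and>
     (\<forall>u ut ux uxx. C12b T (closure Ob) u ut ux uxx \<longrightarrow>
        (LINT z:({0..T} \<times> closure Ob)|\<mu>. u z)
          = (LINT x:Ob|m0. u (0, x))
            + (LINT t:{0..T}|lborel. (LINT x:closure Ob|m t.
                 ut (t, x) + b t x * ux (t, x) + (\<sigma> t x)\<^sup>2 / 2 * uxx (t, x))))"

text \<open>(M, F, X) is a (weak) solution on [0,T] of dX = b dt + sigma dW with X_0 ~ m0,
  in the martingale-problem formulation: X is continuous, adapted to the filtration F,
  X_0 has law m0, and for every compactly supported C^2 function f,
  f(X_t) - f(X_0) - int_0^t (b f' + sigma^2/2 f'')(s, X_s) ds is an F-martingale.\<close>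
definition mp_solution :: "real \<Rightarrow> (real \<Rightarrow> real \<Rightarrow> real) \<Rightarrow> (real \<Rightarrow> real \<Rightarrow> real) \<Rightarrow> real measure
    \<Rightarrow> 'w measure \<Rightarrow> (real \<Rightarrow> 'w measure) \<Rightarrow> ('w \<Rightarrow> real \<Rightarrow> real) \<Rightarrow> bool" where
  "mp_solution T b \<sigma> m0 M F X \<longleftrightarrow> prob_space M
     \<and> (\<forall>t\<in>{0..T}. space (F t) = space M \<and> sets (F t) \<subseteq> sets M)
     \<and> (\<forall>s\<in>{0..T}. \<forall>t\<in>{0..T}. s \<le> t \<longrightarrow> sets (F s) \<subseteq> sets (F t))
     \<and> (\<forall>t\<in>{0..T}. (\<lambda>\<omega>. X \<omega> t) \<in> borel_measurable (F t))
     \<and> (\<forall>\<omega>\<in>space M. continuous_on {0..T} (X \<omega>))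
     \<and> distr M borel (\<lambda>\<omega>. X \<omega> 0) = m0
     \<and> (\<forall>(f::real \<Rightarrow> real) f' f''.
          (\<forall>x. (f has_real_derivative f' x) (at x) \<and> (f' has_real_derivative f'' x) (at x))
          \<and> continuous_on UNIV f'' \<and> (\<exists>K. compact K \<and> (\<forall>x. x \<notin> K \<longrightarrow> f x = 0)) \<longrightarrow>
          (let Y = (\<lambda>t \<omega>. f (X \<omega> t) - f (X \<omega> 0)
                     - (LINT s:{0..t}|lborel. b s (X \<omega> s) * f' (X \<omega> s)
                                              + (\<sigma> s (X \<omega> s))\<^sup>2 / 2 * f'' (X \<omega> s)))
           in (\<forall>t\<in>{0..T}. integrable M (Y t) \<and> Y t \<in> borel_measurable (F t))
            \<and> (\<forall>s\<in>{0..T}. \<forall>t\<in>{0..T}. s \<le> t \<longrightarrow>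
                 (\<forall>A\<in>sets (F s). (LINT \<omega>:A|M. Y t \<omega>) = (LINT \<omega>:A|M. Y s \<omega>)))))"

end

theory Submission
  imports Defs
begin

lemma lin_h1: "(a::real) \<le> 1 + y \<Longrightarrow> 0 \<le> y \<Longrightarrow> 1 + a \<le> 2 * (1 + y)" by (simp add: algebra_simps)
lemma lin_h3: "(u::real) \<le> 1 \<Longrightarrow> 0 \<le> y \<Longrightarrow> u \<le> 1 + y" by linarith
lemma lin_h4: "(a::real) \<le> 1 + y \<Longrightarrow> 0 \<le> y \<Longrightarrow> a + y \<le> 2 * (1 + y)" by (simp add: algebra_simps)

lemma norm_integral_le_nn:
  fixes f :: "'a \<Rightarrow> real"
  shows "ennreal (norm (integral\<^sup>L M f)) \<le> (\<integral>\<^sup>+x. ennreal (norm (f x)) \<partial>M)"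
  using integral_norm_bound_ennreal[of M f]
  by (cases "integrable M f") (auto simp: not_integrable_integral_eq)

definition kern :: "real \<Rightarrow> (real \<Rightarrow> real measure) \<Rightarrow> real \<Rightarrow> real measure" where
  "kern T m t = (if t \<in> {0..T} then m t else null_measure borel)"

lemma Vp_sets:
  assumes "Vp p T S m" "t \<in> {0..T}"
  shows "sets (m t) = sets borel" "space (m t) = UNIV" "emeasure (m t) UNIV \<le> 1"
    "emeasure (m t) (UNIV - S) = 0"
proof -
  have "subprob_on S (m t)" using assms by (auto simp: Vp_def)
  then show s: "sets (m t) = sets borel" "emeasure (m t) UNIV \<le> 1" "emeasure (m t) (UNIV - S) = 0"
    by (auto simp: subprob_on_def)
  show "space (m t) = UNIV" using sets_eq_imp_space_eq[OF s(1)] by simp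
qed

lemma kern_meas:
  assumes "Vp p T S m"
  shows "kern T m \<in> borel \<rightarrow>\<^sub>M subprob_algebra borel"
proof (rule measurable_subprob_algebra)
  fix t :: real
  show "subprob_space (kern T m t)"
  proof (cases "t \<in> {0..T}")
    case True
    then show ?thesis using Vp_sets[OF assms True] by (auto simp: kern_def intro!: subprob_spaceI)
  next
    case False thus ?thesis by (auto simp: kern_def intro!: subprob_space_null_measure)
  qed
  show "sets (kern T m t) = sets borel"
    using Vp_sets[OF assms] by (auto simp: kern_def)
next
  fix A :: "real set" assume A: "A \<in> sets borel"
  have "(\<lambda>t. emeasure (m t) A) \<in> borel_measurable (restrict_space borel {0..T})"
    using assms A by (auto simp: Vp_def)
  then have "(\<lambda>t. emeasure (m t) A * indicator {0..T} t) \<in> borel_measurable borel"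
    by (subst (asm) borel_measurable_restrict_space_iff_ennreal) auto
  moreover have "(\<lambda>t. emeasure (kern T m t) A) = (\<lambda>t. emeasure (m t) A * indicator {0..T} t)"
    by (auto simp: kern_def fun_eq_iff indicator_def)
  ultimately show "(\<lambda>t. emeasure (kern T m t) A) \<in> borel_measurable borel" by simp
qed

lemma integral_kernel_meas:
  fixes f :: "'a \<Rightarrow> 'b \<Rightarrow> real"
  assumes f[measurable]: "(\<lambda>(x,y). f x y) \<in> borel_measurable (M \<Otimes>\<^sub>M N)"
    and L[measurable]: "L \<in> M \<rightarrow>\<^sub>M subprob_algebra N"
  shows "(\<lambda>x. integral\<^sup>L (L x) (f x)) \<in> borel_measurable M"
proof -
  define P where "P x = (\<integral>\<^sup>+y. ennreal (f x y) \<partial>L x)" for x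
  define Q where "Q x = (\<integral>\<^sup>+y. ennreal (- f x y) \<partial>L x)" for x
  define A where "A x = (\<integral>\<^sup>+y. ennreal (norm (f x y)) \<partial>L x)" for x
  have [measurable]: "P \<in> borel_measurable M" unfolding P_def
    by (rule nn_integral_measurable_subprob_algebra2[OF _ L]) measurable
  have [measurable]: "Q \<in> borel_measurable M" unfolding Q_def
    by (rule nn_integral_measurable_subprob_algebra2[OF _ L]) measurable
  have [measurable]: "A \<in> borel_measurable M" unfolding A_def
    by (rule nn_integral_measurable_subprob_algebra2[OF _ L]) measurable
  have eq: "integral\<^sup>L (L x) (f x) = (if A x < \<infinity> then enn2real (P x) - enn2real (Q x) else 0)"
    if x: "x \<in> space M" for x
  proof -
    have "f x \<in> borel_measurable N"
      using measurable_compose[OF measurable_Pair1'[OF x] f] by simp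
    then have fm: "f x \<in> borel_measurable (L x)"
      using sets_kernel[OF L x] by (simp cong: measurable_cong_sets)
    show ?thesis
    proof (cases "A x < \<infinity>")
      case True
      then have "integrable (L x) (f x)" using fm by (simp add: integrable_iff_bounded A_def)
      then show ?thesis using True by (simp add: real_lebesgue_integral_def P_def Q_def)
    next
      case False
      then have "\<not> integrable (L x) (f x)" by (simp add: integrable_iff_bounded A_def)
      then show ?thesis using False by (simp add: not_integrable_integral_eq)
    qed
  qed
  have "(\<lambda>x. if A x < \<infinity> then enn2real (P x) - enn2real (Q x) else 0) \<in> borel_measurable M"
    by measurable
  then show ?thesis by (rule measurable_cong[THEN iffD1, rotated]) (simp add: eq)
qed

lemma meas_conv:
  fixes \<psi> :: "real \<times> real \<Rightarrow> real"
  assumes "\<psi> \<in> borel_measurable (restrict_space borel ({0..T} \<times> S))" "closed S"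
  shows "(\<lambda>(t,x). indicator ({0..T}\<times>S) (t,x) * \<psi> (t,x)) \<in> borel_measurable (borel \<Otimes>\<^sub>M borel)"
proof -
  have c: "{0..T} \<times> S \<in> sets borel" using assms(2) by (intro borel_closed closed_Times) auto
  have "(\<lambda>z. indicator ({0..T}\<times>S) z *\<^sub>R \<psi> z) \<in> borel_measurable borel"
    using assms(1) borel_measurable_restrict_space_iff[of "{0..T}\<times>S" borel \<psi>] c by simp
  moreover have "(\<lambda>(t,x). indicator ({0..T}\<times>S) (t,x) * \<psi> (t,x)) = (\<lambda>z. indicator ({0..T}\<times>S) z * \<psi> z)"
    by auto
  ultimately show ?thesis by (simp add: borel_prod)
qed

lemma inner_eq:
  fixes \<psi> :: "real \<times> real \<Rightarrow> real"
  shows "t \<in> {0..T} \<Longrightarrow> (LINT x:S|m t. \<psi> (t,x))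
     = integral\<^sup>L (kern T m t) (\<lambda>x. indicator ({0..T}\<times>S) (t,x) * \<psi> (t,x))"
  by (simp add: set_lebesgue_integral_def kern_def indicator_times)

lemma inner_meas:
  fixes \<psi> :: "real \<times> real \<Rightarrow> real"
  assumes "Vp p T S m" "\<psi> \<in> borel_measurable (restrict_space borel ({0..T} \<times> S))" "closed S"
  shows "(\<lambda>t. indicator {0..T} t * (LINT x:S|m t. \<psi> (t,x))) \<in> borel_measurable borel"
proof -
  have "(\<lambda>t. integral\<^sup>L (kern T m t) (\<lambda>x. indicator ({0..T}\<times>S) (t,x) * \<psi> (t,x))) \<in> borel_measurable borel"
    by (rule integral_kernel_meas[OF meas_conv[OF assms(2,3)] kern_meas[OF assms(1)]])
  then have "(\<lambda>t. indicator {0..T} t * integral\<^sup>L (kern T m t) (\<lambda>x. indicator ({0..T}\<times>S) (t,x) * \<psi> (t,x)))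
     \<in> borel_measurable borel" by measurable
  moreover have "(\<lambda>t. indicator {0..T} t * integral\<^sup>L (kern T m t) (\<lambda>x. indicator ({0..T}\<times>S) (t,x) * \<psi> (t,x)))
     = (\<lambda>t. indicator {0..T} t * (LINT x:S|m t. \<psi> (t,x)))"
    by (auto simp: fun_eq_iff inner_eq indicator_def)
  ultimately show ?thesis by simp
qed

lemma nnmom_meas:
  assumes "Vp p T S m" "h \<in> borel_measurable borel"
  shows "(\<lambda>t. indicator {0..T} t * (\<integral>\<^sup>+x. h x \<partial>m t)) \<in> borel_measurable borel"
proof -
  have "(\<lambda>t. \<integral>\<^sup>+x. h x \<partial>kern T m t) \<in> borel_measurable borel"
    by (rule measurable_compose[OF kern_meas[OF assms(1)] nn_integral_measurable_subprob_algebra])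
       (rule assms(2))
  then have "(\<lambda>t. indicator {0..T} t * (\<integral>\<^sup>+x. h x \<partial>kern T m t)) \<in> borel_measurable borel"
    by measurable
  moreover have "(\<lambda>t. indicator {0..T} t * (\<integral>\<^sup>+x. h x \<partial>kern T m t))
      = (\<lambda>t. indicator {0..T} t * (\<integral>\<^sup>+x. h x \<partial>m t))"
    by (auto simp: fun_eq_iff kern_def indicator_def)
  ultimately show ?thesis by simp
qed

lemma Vp_AE:
  assumes "Vp p T S m"
  shows "AE t in lborel. t \<in> {0..T} \<longrightarrow> (\<integral>\<^sup>+x. ennreal (\<bar>x\<bar> powr p) \<partial>m t) < \<infinity>"
proof -
  have m: "(\<lambda>t. indicator {0..T} t * (\<integral>\<^sup>+x. ennreal (\<bar>x\<bar> powr p) \<partial>m t)) \<in> borel_measurable lborel"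
    using nnmom_meas[OF assms, of "\<lambda>x. ennreal (\<bar>x\<bar> powr p)"] by simp
  have fin: "(\<integral>\<^sup>+ t. indicator {0..T} t * (\<integral>\<^sup>+ x. ennreal (\<bar>x\<bar> powr p) \<partial>(m t)) \<partial>lborel) \<noteq> \<infinity>"
    using assms by (auto simp: Vp_def)
  show ?thesis using nn_integral_PInf_AE[OF m fin]
    by eventually_elim (auto simp: top.not_eq_extremum)
qed

lemma inner_nn_bound:
  fixes \<psi> :: "real \<times> real \<Rightarrow> real"
  assumes Vp: "Vp p T S m" and t: "t \<in> {0..T}"
    and g: "\<forall>t\<in>{0..T}. \<forall>x\<in>S. \<bar>\<psi> (t,x)\<bar> \<le> C * (1 + \<bar>x\<bar> powr p)"
  shows "(\<integral>\<^sup>+x. ennreal (norm (indicator S x * \<psi> (t,x))) \<partial>m t)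
           \<le> ennreal \<bar>C\<bar> * (1 + (\<integral>\<^sup>+x. ennreal (\<bar>x\<bar> powr p) \<partial>m t))"
proof -
  have [measurable_cong]: "sets (m t) = sets borel" using Vp_sets[OF Vp t] by simp
  have "(\<integral>\<^sup>+x. ennreal (norm (indicator S x * \<psi> (t,x))) \<partial>m t)
      \<le> (\<integral>\<^sup>+x. ennreal \<bar>C\<bar> * (1 + ennreal (\<bar>x\<bar> powr p)) \<partial>m t)"
  proof (rule nn_integral_mono)
    fix x
    have "norm (indicator S x * \<psi>(t,x)) \<le> \<bar>C\<bar> * (1 + \<bar>x\<bar> powr p)"
    proof (cases "x \<in> S")
      case True then have "\<bar>\<psi>(t,x)\<bar> \<le> C * (1 + \<bar>x\<bar> powr p)" using g t by auto
      also have "\<dots> \<le> \<bar>C\<bar> * (1 + \<bar>x\<bar> powr p)" by (intro mult_right_mono) auto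
      finally show ?thesis using True by simp
    qed simp
    then have "ennreal (norm (indicator S x * \<psi>(t,x))) \<le> ennreal (\<bar>C\<bar> * (1 + \<bar>x\<bar> powr p))"
      by (rule ennreal_leI)
    also have "\<dots> = ennreal \<bar>C\<bar> * (1 + ennreal (\<bar>x\<bar> powr p))"
      by (simp add: ennreal_mult ennreal_plus)
    finally show "ennreal (norm (indicator S x * \<psi> (t,x))) \<le> ennreal \<bar>C\<bar> * (1 + ennreal (\<bar>x\<bar> powr p))" .
  qed
  also have "\<dots> = ennreal \<bar>C\<bar> * (\<integral>\<^sup>+x. 1 + ennreal (\<bar>x\<bar> powr p) \<partial>m t)"
    by (rule nn_integral_cmult) measurable
  also have "(\<integral>\<^sup>+x. 1 + ennreal (\<bar>x\<bar> powr p) \<partial>m t) = emeasure (m t) UNIV + (\<integral>\<^sup>+x. ennreal (\<bar>x\<bar> powr p) \<partial>m t)"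
    by (subst nn_integral_add) (auto simp: Vp_sets[OF Vp t])
  also have "ennreal \<bar>C\<bar> * (emeasure (m t) UNIV + (\<integral>\<^sup>+x. ennreal (\<bar>x\<bar> powr p) \<partial>m t))
      \<le> ennreal \<bar>C\<bar> * (1 + (\<integral>\<^sup>+x. ennreal (\<bar>x\<bar> powr p) \<partial>m t))"
    using Vp_sets(3)[OF Vp t] by (intro mult_left_mono add_right_mono) auto
  finally show ?thesis .
qed

lemma inner_abs_bound:
  fixes \<psi> :: "real \<times> real \<Rightarrow> real"
  assumes Vp: "Vp p T S m" and t: "t \<in> {0..T}"
    and g: "\<forall>t\<in>{0..T}. \<forall>x\<in>S. \<bar>\<psi> (t,x)\<bar> \<le> C * (1 + \<bar>x\<bar> powr p)"
  shows "ennreal \<bar>LINT x:S|m t. \<psi> (t,x)\<bar> \<le> ennreal \<bar>C\<bar> * (1 + (\<integral>\<^sup>+x. ennreal (\<bar>x\<bar> powr p) \<partial>m t))"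
  using norm_integral_le_nn[of "m t" "\<lambda>x. indicator S x * \<psi> (t,x)"] inner_nn_bound[OF Vp t g]
  by (simp add: set_lebesgue_integral_def)

lemma section_meas:
  fixes \<psi> :: "real \<times> real \<Rightarrow> real"
  assumes Vp: "Vp p T S m" and t: "t \<in> {0..T}"
    and meas: "\<psi> \<in> borel_measurable (restrict_space borel ({0..T} \<times> S))" and cl: "closed S"
  shows "(\<lambda>x. indicator S x * \<psi> (t,x)) \<in> borel_measurable (m t)"
proof -
  have "(\<lambda>x. indicator ({0..T}\<times>S) (t,x) * \<psi> (t,x)) \<in> borel_measurable borel"
    using measurable_compose[OF measurable_Pair1'[of t borel borel] meas_conv[OF meas cl]] by simp
  moreover have "(\<lambda>x. indicator ({0..T}\<times>S) (t,x) * \<psi> (t,x)) = (\<lambda>x. indicator S x * \<psi> (t,x))"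
    using t by (auto simp: fun_eq_iff indicator_times)
  ultimately show ?thesis using Vp_sets[OF Vp t] by (simp cong: measurable_cong_sets)
qed

lemma inner_integrable:
  fixes \<psi> :: "real \<times> real \<Rightarrow> real"
  assumes Vp: "Vp p T S m" and t: "t \<in> {0..T}"
    and meas: "\<psi> \<in> borel_measurable (restrict_space borel ({0..T} \<times> S))" and cl: "closed S"
    and g: "\<forall>t\<in>{0..T}. \<forall>x\<in>S. \<bar>\<psi> (t,x)\<bar> \<le> C * (1 + \<bar>x\<bar> powr p)"
    and fin: "(\<integral>\<^sup>+x. ennreal (\<bar>x\<bar> powr p) \<partial>m t) < \<infinity>"
  shows "integrable (m t) (\<lambda>x. indicator S x * \<psi> (t,x))"
  unfolding integrable_iff_bounded
proof
  show "(\<lambda>x. indicator S x * \<psi> (t,x)) \<in> borel_measurable (m t)" by (rule section_meas[OF Vp t meas cl])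
  have "ennreal \<bar>C\<bar> * (1 + (\<integral>\<^sup>+x. ennreal (\<bar>x\<bar> powr p) \<partial>m t)) < \<infinity>"
    using fin by (simp add: ennreal_mult_less_top)
  then show "(\<integral>\<^sup>+x. ennreal (norm (indicator S x * \<psi> (t,x))) \<partial>m t) < \<infinity>"
    using inner_nn_bound[OF Vp t g] by (rule le_less_trans[rotated])
qed

lemma outer_integrable:
  fixes \<psi> :: "real \<times> real \<Rightarrow> real"
  assumes Vp: "Vp p T S m"
    and meas: "\<psi> \<in> borel_measurable (restrict_space borel ({0..T} \<times> S))" and cl: "closed S"
    and g: "\<forall>t\<in>{0..T}. \<forall>x\<in>S. \<bar>\<psi> (t,x)\<bar> \<le> C * (1 + \<bar>x\<bar> powr p)"
  shows "set_integrable lborel {0..T} (\<lambda>t. LINT x:S|m t. \<psi> (t,x))"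
  unfolding set_integrable_def integrable_iff_bounded
proof
  show "(\<lambda>t. indicator {0..T} t *\<^sub>R (LINT x:S|m t. \<psi> (t,x))) \<in> borel_measurable lborel"
    using inner_meas[OF Vp meas cl] by simp
  define M where "M t = (\<integral>\<^sup>+x. ennreal (\<bar>x\<bar> powr p) \<partial>m t)" for t
  have Mm[measurable]: "(\<lambda>t. indicator {0..T} t * M t) \<in> borel_measurable borel"
    unfolding M_def by (rule nnmom_meas[OF Vp]) measurable
  have "(\<integral>\<^sup>+t. ennreal (norm (indicator {0..T} t *\<^sub>R (LINT x:S|m t. \<psi> (t,x)))) \<partial>lborel)
     \<le> (\<integral>\<^sup>+t. ennreal \<bar>C\<bar> * (indicator {0..T} t + indicator {0..T} t * M t) \<partial>lborel)"
  proof (rule nn_integral_mono)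
    fix t show "ennreal (norm (indicator {0..T} t *\<^sub>R (LINT x:S|m t. \<psi> (t,x))))
        \<le> ennreal \<bar>C\<bar> * (indicator {0..T} t + indicator {0..T} t * M t)"
      using inner_abs_bound[OF Vp _ g, of t] by (cases "t \<in> {0..T}") (auto simp: M_def)
  qed
  also have "\<dots> = ennreal \<bar>C\<bar> * (emeasure lborel {0..T} + (\<integral>\<^sup>+t. indicator {0..T} t * M t \<partial>lborel))"
    by (subst nn_integral_cmult) (auto simp: nn_integral_add)
  also have "\<dots> < \<infinity>"
  proof -
    have "(\<integral>\<^sup>+t. indicator {0..T} t * M t \<partial>lborel) < \<infinity>"
      using Vp by (simp add: Vp_def M_def)
    moreover have "emeasure lborel {0..T} < \<infinity>" by (cases "0 \<le> T") auto
    ultimately show ?thesis by (simp add: ennreal_mult_less_top)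
  qed
  finally show "(\<integral>\<^sup>+t. ennreal (norm (indicator {0..T} t *\<^sub>R (LINT x:S|m t. \<psi> (t,x)))) \<partial>lborel) < \<infinity>" .
qed

lemma outer_split:
  fixes \<psi>1 \<psi>2 :: "real \<times> real \<Rightarrow> real"
  assumes Vp: "Vp p T S m" and cl: "closed S"
    and m1: "\<psi>1 \<in> borel_measurable (restrict_space borel ({0..T} \<times> S))"
    and m2: "\<psi>2 \<in> borel_measurable (restrict_space borel ({0..T} \<times> S))"
    and g1: "\<forall>t\<in>{0..T}. \<forall>x\<in>S. \<bar>\<psi>1 (t,x)\<bar> \<le> C1 * (1 + \<bar>x\<bar> powr p)"
    and g2: "\<forall>t\<in>{0..T}. \<forall>x\<in>S. \<bar>\<psi>2 (t,x)\<bar> \<le> C2 * (1 + \<bar>x\<bar> powr p)"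
  shows "(LINT t:{0..T}|lborel. (LINT x:S|m t. \<psi>1 (t,x) + \<psi>2 (t,x)))
       = (LINT t:{0..T}|lborel. (LINT x:S|m t. \<psi>1 (t,x))) + (LINT t:{0..T}|lborel. (LINT x:S|m t. \<psi>2 (t,x)))"
proof -
  have m12: "(\<lambda>z. \<psi>1 z + \<psi>2 z) \<in> borel_measurable (restrict_space borel ({0..T} \<times> S))"
    using m1 m2 by measurable
  have AE: "AE t in lborel. indicator {0..T} t * (LINT x:S|m t. \<psi>1 (t,x) + \<psi>2 (t,x))
       = indicator {0..T} t * ((LINT x:S|m t. \<psi>1 (t,x)) + (LINT x:S|m t. \<psi>2 (t,x)))"
    using Vp_AE[OF Vp]
  proof eventually_elim
    case (elim t)
    show ?case
    proof (cases "t \<in> {0..T}")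
      case True
      then have fin: "(\<integral>\<^sup>+x. ennreal (\<bar>x\<bar> powr p) \<partial>m t) < \<infinity>" using elim by simp
      have i1: "set_integrable (m t) S (\<lambda>x. \<psi>1 (t,x))"
        using inner_integrable[OF Vp True m1 cl g1 fin] by (simp add: set_integrable_def)
      have i2: "set_integrable (m t) S (\<lambda>x. \<psi>2 (t,x))"
        using inner_integrable[OF Vp True m2 cl g2 fin] by (simp add: set_integrable_def)
      show ?thesis using set_integral_add(2)[OF i1 i2] by simp
    qed simp
  qed
  have "(LINT t:{0..T}|lborel. (LINT x:S|m t. \<psi>1 (t,x) + \<psi>2 (t,x)))
      = (LINT t:{0..T}|lborel. (LINT x:S|m t. \<psi>1 (t,x)) + (LINT x:S|m t. \<psi>2 (t,x)))"
    unfolding set_lebesgue_integral_def[of lborel "{0..T}"]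
  proof (rule integral_cong_AE)
    show "(\<lambda>t. indicat_real {0..T} t *\<^sub>R (LINT x:S|m t. \<psi>1 (t, x) + \<psi>2 (t, x))) \<in> borel_measurable lborel"
      using inner_meas[OF Vp m12 cl] by simp
    show "(\<lambda>t. indicat_real {0..T} t *\<^sub>R ((LINT x:S|m t. \<psi>1 (t, x)) + (LINT x:S|m t. \<psi>2 (t, x)))) \<in> borel_measurable lborel"
      using inner_meas[OF Vp m1 cl] inner_meas[OF Vp m2 cl]
      by (simp add: distrib_left)
    show "AE t in lborel. indicat_real {0..T} t *\<^sub>R (LINT x:S|m t. \<psi>1 (t, x) + \<psi>2 (t, x))
        = indicat_real {0..T} t *\<^sub>R ((LINT x:S|m t. \<psi>1 (t, x)) + (LINT x:S|m t. \<psi>2 (t, x)))"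
      using AE by simp
  qed
  also have "\<dots> = (LINT t:{0..T}|lborel. (LINT x:S|m t. \<psi>1 (t,x))) + (LINT t:{0..T}|lborel. (LINT x:S|m t. \<psi>2 (t,x)))"
    by (rule set_integral_add(2)[OF outer_integrable[OF Vp m1 cl g1] outer_integrable[OF Vp m2 cl g2]])
  finally show ?thesis .
qed

lemma outer_tail:
  fixes \<psi> :: "real \<times> real \<Rightarrow> real"
  assumes Vp: "Vp p T S m" and cl: "closed S" and Vm: "V \<in> borel_measurable borel"
    and g: "\<forall>t\<in>{0..T}. \<forall>x\<in>S. \<bar>\<psi> (t,x)\<bar> \<le> c * V x" and c: "0 \<le> c" and K: "0 \<le> K"
    and bd: "(\<integral>\<^sup>+t. indicator {0..T} t * (\<integral>\<^sup>+x. indicator S x * ennreal (V x) \<partial>m t) \<partial>lborel) \<le> ennreal K"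
  shows "\<bar>LINT t:{0..T}|lborel. (LINT x:S|m t. \<psi> (t,x))\<bar> \<le> c * K"
proof -
  have Sb: "S \<in> sets borel" using cl by auto
  have im: "(\<lambda>t. indicator {0..T} t * (\<integral>\<^sup>+x. indicator S x * ennreal (V x) \<partial>m t)) \<in> borel_measurable borel"
    by (rule nnmom_meas[OF Vp]) (use Sb Vm in measurable)
  have inner: "ennreal \<bar>LINT x:S|m t. \<psi> (t,x)\<bar> \<le> ennreal c * (\<integral>\<^sup>+x. indicator S x * ennreal (V x) \<partial>m t)"
    if t: "t \<in> {0..T}" for t
  proof -
    have [measurable_cong]: "sets (m t) = sets borel" using Vp_sets[OF Vp t] by simp
    have "ennreal \<bar>LINT x:S|m t. \<psi> (t,x)\<bar> \<le> (\<integral>\<^sup>+x. ennreal (norm (indicator S x * \<psi> (t,x))) \<partial>m t)"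
      using norm_integral_le_nn[of "m t" "\<lambda>x. indicator S x * \<psi> (t,x)"]
      by (simp add: set_lebesgue_integral_def)
    also have "\<dots> \<le> (\<integral>\<^sup>+x. ennreal c * (indicator S x * ennreal (V x)) \<partial>m t)"
    proof (rule nn_integral_mono)
      fix x show "ennreal (norm (indicator S x * \<psi> (t,x))) \<le> ennreal c * (indicator S x * ennreal (V x))"
      proof (cases "x \<in> S")
        case True
        then have "\<bar>\<psi> (t,x)\<bar> \<le> c * V x" using g t by auto
        then have "ennreal \<bar>\<psi> (t,x)\<bar> \<le> ennreal (c * V x)" by (rule ennreal_leI)
        then show ?thesis using True c by (simp add: ennreal_mult')
      qed simp
    qed
    also have "\<dots> = ennreal c * (\<integral>\<^sup>+x. indicator S x * ennreal (V x) \<partial>m t)"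
      by (rule nn_integral_cmult) (use Sb Vm in measurable)
    finally show ?thesis .
  qed
  have "ennreal \<bar>LINT t:{0..T}|lborel. (LINT x:S|m t. \<psi> (t,x))\<bar>
      \<le> (\<integral>\<^sup>+t. ennreal (norm (indicator {0..T} t * (LINT x:S|m t. \<psi> (t,x)))) \<partial>lborel)"
    using norm_integral_le_nn[of lborel "\<lambda>t. indicator {0..T} t * (LINT x:S|m t. \<psi> (t,x))"]
    by (simp add: set_lebesgue_integral_def)
  also have "\<dots> \<le> (\<integral>\<^sup>+t. ennreal c * (indicator {0..T} t * (\<integral>\<^sup>+x. indicator S x * ennreal (V x) \<partial>m t)) \<partial>lborel)"
  proof (rule nn_integral_mono)
    fix t show "ennreal (norm (indicator {0..T} t * (LINT x:S|m t. \<psi> (t,x))))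
       \<le> ennreal c * (indicator {0..T} t * (\<integral>\<^sup>+x. indicator S x * ennreal (V x) \<partial>m t))"
      using inner[of t] by (cases "t \<in> {0..T}") auto
  qed
  also have "\<dots> = ennreal c * (\<integral>\<^sup>+t. indicator {0..T} t * (\<integral>\<^sup>+x. indicator S x * ennreal (V x) \<partial>m t) \<partial>lborel)"
    by (rule nn_integral_cmult) (use im in simp)
  also have "\<dots> \<le> ennreal c * ennreal K" by (intro mult_left_mono bd) auto
  also have "\<dots> = ennreal (c * K)" using c by (simp add: ennreal_mult')
  finally show ?thesis using c K by (simp add: ennreal_le_iff)
qed

definition Vf :: "real \<Rightarrow> real \<Rightarrow> real" where "Vf a x = (1 + x\<^sup>2) powr a"
definition V1 :: "real \<Rightarrow> real \<Rightarrow> real" where "V1 a x = 2 * a * x * (1 + x\<^sup>2) powr (a - 1)"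
definition V2 :: "real \<Rightarrow> real \<Rightarrow> real" where
  "V2 a x = 2 * a * (1 + x\<^sup>2) powr (a - 1) + 4 * a * (a - 1) * x\<^sup>2 * (1 + x\<^sup>2) powr (a - 2)"
definition gf :: "real \<Rightarrow> real \<Rightarrow> real \<Rightarrow> real" where "gf a e x = Vf a x / (1 + e * Vf a x)"
definition g1 :: "real \<Rightarrow> real \<Rightarrow> real \<Rightarrow> real" where "g1 a e x = V1 a x / (1 + e * Vf a x)\<^sup>2"
definition g2 :: "real \<Rightarrow> real \<Rightarrow> real \<Rightarrow> real" where
  "g2 a e x = V2 a x / (1 + e * Vf a x)\<^sup>2 - 2 * e * (V1 a x)\<^sup>2 / (1 + e * Vf a x) ^ 3"

lemma w_pos: "0 < 1 + (x::real)\<^sup>2" by (simp add: add_pos_nonneg)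

lemma Vf_ge1: "0 \<le> a \<Longrightarrow> 1 \<le> Vf a x"
  unfolding Vf_def by (simp add: ge_one_powr_ge_zero)

lemma DV: "(Vf a has_real_derivative V1 a x) (at x)"
  unfolding Vf_def[abs_def]
  using w_pos[of x] by (auto intro!: derivative_eq_intros simp: V1_def algebra_simps)

lemma DV1: "(V1 a has_real_derivative V2 a x) (at x)"
proof -
  have "((\<lambda>x. 2 * a * x * (1 + x\<^sup>2) powr (a - 1)) has_real_derivative
      2 * a * (1 + x\<^sup>2) powr (a - 1) + 2 * a * x * ((a - 1) * (1 + x\<^sup>2) powr (a - 1 - 1) * (2 * x))) (at x)"
    using w_pos[of x] by (auto intro!: derivative_eq_intros)
  moreover have "2 * a * (1 + x\<^sup>2) powr (a - 1) + 2 * a * x * ((a - 1) * (1 + x\<^sup>2) powr (a - 1 - 1) * (2 * x))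
      = V2 a x" unfolding V2_def by (simp add: power2_eq_square algebra_simps)
  ultimately show ?thesis unfolding V1_def by (simp add: fun_eq_iff)
qed

lemma Dg: assumes "0 \<le> e" "0 \<le> a" shows "(gf a e has_real_derivative g1 a e x) (at x)"
proof -
  have d: "1 + e * Vf a x \<noteq> 0" using Vf_ge1[OF assms(2), of x] assms(1)
    by (metis add_pos_nonneg less_numeral_extra(1) mult_nonneg_nonneg order.trans zero_le_one less_irrefl)
  have "((\<lambda>x. Vf a x / (1 + e * Vf a x)) has_real_derivative
     (V1 a x * (1 + e * Vf a x) - Vf a x * (e * V1 a x)) / ((1 + e * Vf a x) * (1 + e * Vf a x))) (at x)"
    using d by (auto intro!: derivative_eq_intros DV)
  moreover have "(V1 a x * (1 + e * Vf a x) - Vf a x * (e * V1 a x)) / ((1 + e * Vf a x) * (1 + e * Vf a x))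
     = g1 a e x" unfolding g1_def by (simp add: power2_eq_square algebra_simps)
  ultimately show ?thesis unfolding gf_def[abs_def] by simp
qed

lemma aux_field: "(D::real) \<noteq> 0 \<Longrightarrow>
   (v2 * D\<^sup>2 - v1 * (2 * D * (e * v1))) / (D\<^sup>2 * D\<^sup>2) = v2 / D\<^sup>2 - 2 * e * v1\<^sup>2 / D ^ 3"
  by (simp add: field_simps power2_eq_square power3_eq_cube)

lemma Dg1: assumes "0 \<le> e" "0 \<le> a" shows "(g1 a e has_real_derivative g2 a e x) (at x)"
proof -
  have d: "1 + e * Vf a x \<noteq> 0" using Vf_ge1[OF assms(2), of x] assms(1)
    by (metis add_pos_nonneg less_numeral_extra(1) mult_nonneg_nonneg order.trans zero_le_one less_irrefl)
  have "((\<lambda>x. V1 a x / (1 + e * Vf a x)\<^sup>2) has_real_derivative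
     (V2 a x * (1 + e * Vf a x)\<^sup>2 - V1 a x * (2 * (1 + e * Vf a x) * (e * V1 a x))) / ((1 + e * Vf a x)\<^sup>2 * (1 + e * Vf a x)\<^sup>2)) (at x)"
    using d by (auto intro!: derivative_eq_intros DV DV1 simp: power2_eq_square)
  moreover have "(V2 a x * (1 + e * Vf a x)\<^sup>2 - V1 a x * (2 * (1 + e * Vf a x) * (e * V1 a x))) / ((1 + e * Vf a x)\<^sup>2 * (1 + e * Vf a x)\<^sup>2)
     = g2 a e x" using aux_field[OF d] unfolding g2_def by simp
  ultimately show ?thesis unfolding g1_def[abs_def] by simp
qed

lemma powr_split: "0 < (w::real) \<Longrightarrow> w powr a = w * w powr (a - 1)"
proof -
  assume w: "0 < w"
  have "w powr a = w powr ((a - 1) + 1)" by simp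
  also have "\<dots> = w powr (a - 1) * w powr 1" by (rule powr_add)
  also have "\<dots> = w powr (a - 1) * w" using w by simp
  finally show ?thesis by (simp add: mult.commute)
qed

lemma abs_le_w: "\<bar>x::real\<bar> \<le> 1 + x\<^sup>2"
proof (cases "\<bar>x\<bar> \<le> 1")
  case True then show ?thesis by (rule lin_h3) simp
next
  case False then have "\<bar>x\<bar> * 1 \<le> \<bar>x\<bar> * \<bar>x\<bar>" by (intro mult_left_mono) auto
  then have "\<bar>x\<bar> \<le> x\<^sup>2" by (simp add: power2_eq_square)
  then show ?thesis by linarith
qed

lemma mpow_le_w: assumes "0 \<le> r" "r \<le> 2" shows "mpow \<bar>x\<bar> r \<le> 1 + x\<^sup>2"
proof (cases "r = 0")
  case True then show ?thesis by (simp add: mpow_def)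
next
  case False
  show ?thesis
  proof (cases "\<bar>x\<bar> \<le> 1")
    case True
    then have "\<bar>x\<bar> powr r \<le> 1 powr r" using assms by (intro powr_mono2) auto
    then have "\<bar>x\<bar> powr r \<le> 1" by simp
    then show ?thesis using False by (simp add: mpow_def lin_h3)
  next
    case c: False
    then have "\<bar>x\<bar> powr r \<le> \<bar>x\<bar> powr 2" using assms by (intro powr_mono) auto
    also have "\<dots> = x\<^sup>2" using c by (simp add: powr_numeral)
    finally show ?thesis using False by (simp add: mpow_def)
  qed
qed

lemma V1_bound: assumes "0 \<le> a" shows "\<bar>V1 a x\<bar> \<le> 2 * a * Vf a x"
proof -
  have P: "0 \<le> (1 + x\<^sup>2) powr (a - 1)" by simp
  have "\<bar>V1 a x\<bar> = 2 * a * \<bar>x\<bar> * (1 + x\<^sup>2) powr (a - 1)" using assms by (simp add: V1_def abs_mult)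
  also have "\<dots> \<le> 2 * a * (1 + x\<^sup>2) * (1 + x\<^sup>2) powr (a - 1)"
    using assms abs_le_w[of x] P by (intro mult_right_mono mult_left_mono) auto
  also have "\<dots> = 2 * a * Vf a x" using powr_split[OF w_pos[of x], of a] by (simp add: Vf_def)
  finally show ?thesis .
qed

lemma V2_bounds: assumes "1 \<le> a"
  shows "0 \<le> V2 a x" "V2 a x \<le> (2 * a + 4 * a * (a - 1)) * (1 + x\<^sup>2) powr (a - 1)"
    "V2 a x \<le> (2 * a + 4 * a * (a - 1)) * Vf a x"
proof -
  have P: "0 \<le> (1 + x\<^sup>2) powr (a - 1)" "0 \<le> (1 + x\<^sup>2) powr (a - 2)" by simp_all
  have PQ: "(1 + x\<^sup>2) powr (a - 1) = (1 + x\<^sup>2) * (1 + x\<^sup>2) powr (a - 2)"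
    using powr_split[OF w_pos[of x], of "a - 1"] by simp
  show "0 \<le> V2 a x" unfolding V2_def using assms P by (intro add_nonneg_nonneg mult_nonneg_nonneg) auto
  have "x\<^sup>2 * (1 + x\<^sup>2) powr (a - 2) \<le> (1 + x\<^sup>2) * (1 + x\<^sup>2) powr (a - 2)"
    using P by (intro mult_right_mono) auto
  then have "4 * a * (a - 1) * (x\<^sup>2 * (1 + x\<^sup>2) powr (a - 2)) \<le> 4 * a * (a - 1) * (1 + x\<^sup>2) powr (a - 1)"
    using assms PQ by (intro mult_left_mono) auto
  then show V2: "V2 a x \<le> (2 * a + 4 * a * (a - 1)) * (1 + x\<^sup>2) powr (a - 1)"
    unfolding V2_def by (simp add: algebra_simps)
  have "1 * (1 + x\<^sup>2) powr (a - 1) \<le> (1 + x\<^sup>2) * (1 + x\<^sup>2) powr (a - 1)"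
    using P by (intro mult_right_mono) auto
  then have "(1 + x\<^sup>2) powr (a - 1) \<le> Vf a x"
    using powr_split[OF w_pos[of x], of a] by (simp add: Vf_def)
  then have "(2 * a + 4 * a * (a - 1)) * (1 + x\<^sup>2) powr (a - 1) \<le> (2 * a + 4 * a * (a - 1)) * Vf a x"
    using assms by (intro mult_left_mono) auto
  with V2 show "V2 a x \<le> (2 * a + 4 * a * (a - 1)) * Vf a x" by linarith
qed

lemma LV_bound:
  assumes a: "1 \<le> a" and c1: "0 \<le> c1" and r: "0 \<le> r" "r \<le> 2"
    and B: "\<bar>B\<bar> \<le> c1 * (1 + \<bar>x\<bar>)" and s: "0 \<le> s2" "s2 \<le> c1 * (1 + mpow \<bar>x\<bar> r)"
  shows "B * V1 a x + s2 / 2 * V2 a x \<le> c1 * (2 * a + 4 * a\<^sup>2) * Vf a x"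
proof -
  define w where "w = 1 + x\<^sup>2"
  define P where "P = w powr (a - 1)"
  have P: "0 \<le> P" by (simp add: P_def)
  have V: "Vf a x = w * P" unfolding P_def w_def Vf_def using powr_split[OF w_pos[of x], of a] by simp
  have e: "(1 + \<bar>x\<bar>) * \<bar>x\<bar> = \<bar>x\<bar> + x\<^sup>2" by (simp add: algebra_simps power2_eq_square)
  have "\<bar>x\<bar> + x\<^sup>2 \<le> 2 * w" unfolding w_def using abs_le_w[of x] by (rule lin_h4) simp
  then have w1: "(1 + \<bar>x\<bar>) * \<bar>x\<bar> \<le> 2 * w" by (simp only: e)
  have "B * V1 a x \<le> \<bar>B\<bar> * \<bar>V1 a x\<bar>" by (simp add: abs_mult[symmetric])
  also have "\<bar>V1 a x\<bar> = 2 * a * \<bar>x\<bar> * P" using a by (simp add: V1_def abs_mult P_def w_def)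
  also have "\<bar>B\<bar> * (2 * a * \<bar>x\<bar> * P) \<le> c1 * (1 + \<bar>x\<bar>) * (2 * a * \<bar>x\<bar> * P)"
    using B a P by (intro mult_right_mono) auto
  also have "\<dots> = (2 * a * c1 * P) * ((1 + \<bar>x\<bar>) * \<bar>x\<bar>)" by (simp add: algebra_simps)
  also have "\<dots> \<le> (2 * a * c1 * P) * (2 * w)" using w1 a c1 P by (intro mult_left_mono) auto
  finally have b1: "B * V1 a x \<le> 4 * a * c1 * (w * P)" by (simp add: algebra_simps)
  have m: "1 + mpow \<bar>x\<bar> r \<le> 2 * w" unfolding w_def using mpow_le_w[OF r, of x] by (rule lin_h1) simp
  have v2: "0 \<le> V2 a x" "V2 a x \<le> (2 * a + 4 * a * (a - 1)) * P"
    using V2_bounds[OF a, of x] by (simp_all add: P_def w_def)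
  have "s2 / 2 * V2 a x \<le> (c1 * (1 + mpow \<bar>x\<bar> r)) / 2 * ((2 * a + 4 * a * (a - 1)) * P)"
    using s v2 by (intro mult_mono divide_right_mono) auto
  also have "\<dots> \<le> (c1 * (2 * w)) / 2 * ((2 * a + 4 * a * (a - 1)) * P)"
    using m c1 a P by (intro mult_right_mono divide_right_mono mult_left_mono mult_nonneg_nonneg) auto
  finally have b2: "s2 / 2 * V2 a x \<le> c1 * (2 * a + 4 * a * (a - 1)) * (w * P)" by (simp add: algebra_simps)
  have "B * V1 a x + s2 / 2 * V2 a x \<le> (4 * a * c1 + c1 * (2 * a + 4 * a * (a - 1))) * (w * P)"
    using b1 b2 by (simp add: algebra_simps)
  also have "4 * a * c1 + c1 * (2 * a + 4 * a * (a - 1)) = c1 * (2 * a + 4 * a\<^sup>2)"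
    by (simp add: algebra_simps power2_eq_square)
  finally show ?thesis using V by simp
qed

lemma gfa: assumes "1 \<le> V" "0 < (e::real)"
  shows "0 \<le> V / (1 + e * V)" "V / (1 + e * V) \<le> V" "V / (1 + e * V) \<le> 1 / e"
proof -
  have D: "1 \<le> 1 + e * V" using assms by simp
  show "0 \<le> V / (1 + e * V)" using assms D by simp
  show "V / (1 + e * V) \<le> V" using assms D by (simp add: divide_le_eq)
  have "e * V / (1 + e * V) \<le> 1" using D by simp
  then show "V / (1 + e * V) \<le> 1 / e" using assms D by (simp add: field_simps)
qed

lemma g1a: assumes "\<bar>v1\<bar> \<le> 2 * a * V" "1 \<le> V" "0 < (e::real)" "0 \<le> a"
  shows "\<bar>v1 / (1 + e * V)\<^sup>2\<bar> \<le> 2 * a / e"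
proof -
  define D where "D = 1 + e * V"
  have D: "1 \<le> D" using assms by (simp add: D_def)
  have "\<bar>v1 / D\<^sup>2\<bar> = \<bar>v1\<bar> / D\<^sup>2" by simp
  also have "\<dots> \<le> 2 * a * V / D\<^sup>2" using assms D by (intro divide_right_mono) auto
  also have "\<dots> \<le> 2 * a * V / D" using assms D
    by (intro divide_left_mono) (auto simp: power2_eq_square)
  also have "\<dots> = 2 * a * (V / D)" by simp
  also have "\<dots> \<le> 2 * a * (1 / e)" using gfa(3)[OF assms(2,3)] assms(4) by (intro mult_left_mono) (auto simp: D_def)
  finally show ?thesis by (simp add: D_def)
qed

lemma g2a: assumes "0 \<le> v2" "v2 \<le> c * V" "\<bar>v1\<bar> \<le> 2 * a * V" "1 \<le> V" "0 < (e::real)" "0 \<le> a" "0 \<le> c"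
  shows "\<bar>v2 / (1 + e * V)\<^sup>2 - 2 * e * v1\<^sup>2 / (1 + e * V) ^ 3\<bar> \<le> c / e + 8 * a\<^sup>2 / e"
proof -
  define D where "D = 1 + e * V"
  have D: "1 \<le> D" using assms by (simp add: D_def)
  have VD: "V / D \<le> 1 / e" "e * V \<le> D" using gfa(3)[OF assms(4,5)] by (auto simp: D_def)
  have t1: "\<bar>v2 / D\<^sup>2\<bar> \<le> c / e"
  proof -
    have "\<bar>v2 / D\<^sup>2\<bar> = v2 / D\<^sup>2" using assms by simp
    also have "\<dots> \<le> c * V / D\<^sup>2" using assms D by (intro divide_right_mono) auto
    also have "\<dots> \<le> c * V / D" using assms D
      by (intro divide_left_mono) (auto simp: power2_eq_square)
    also have "\<dots> = c * (V / D)" by simp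
    also have "\<dots> \<le> c * (1 / e)" using VD assms by (intro mult_left_mono) auto
    finally show ?thesis by simp
  qed
  have t2: "\<bar>2 * e * v1\<^sup>2 / D ^ 3\<bar> \<le> 8 * a\<^sup>2 / e"
  proof -
    have "\<bar>v1\<bar> \<le> \<bar>2 * a * V\<bar>" using assms by simp
    then have "v1\<^sup>2 \<le> (2 * a * V)\<^sup>2" by (simp only: abs_le_square_iff)
    have "0 \<le> 2 * e * v1\<^sup>2 / D ^ 3" using assms D by simp
    then have "\<bar>2 * e * v1\<^sup>2 / D ^ 3\<bar> = 2 * e * v1\<^sup>2 / D ^ 3" by (rule abs_of_nonneg)
    also have "\<dots> \<le> 2 * e * (2 * a * V)\<^sup>2 / D ^ 3"
      using assms D \<open>v1\<^sup>2 \<le> (2 * a * V)\<^sup>2\<close> by (intro divide_right_mono mult_left_mono) auto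
    also have "\<dots> = 8 * a\<^sup>2 * ((e * V) / D) * (V / D) * (1 / D)"
      by (simp add: power2_eq_square power3_eq_cube)
    also have "\<dots> \<le> 8 * a\<^sup>2 * 1 * (1 / e) * 1"
    proof -
      have "(e * V) / D \<le> 1" using VD D by simp
      moreover have "1 / D \<le> 1" using D by simp
      moreover have "0 \<le> (e * V) / D" "0 \<le> V / D" "0 \<le> 1 / D" using assms D by auto
      ultimately show ?thesis using VD assms
        by (intro mult_mono mult_left_mono) (auto simp: mult_nonneg_nonneg)
    qed
    finally show ?thesis by simp
  qed
  have "\<bar>v2 / D\<^sup>2 - 2 * e * v1\<^sup>2 / D ^ 3\<bar> \<le> \<bar>v2 / D\<^sup>2\<bar> + \<bar>2 * e * v1\<^sup>2 / D ^ 3\<bar>"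
    by (rule abs_triangle_ineq4)
  also have "\<dots> \<le> c / e + 8 * a\<^sup>2 / e" using t1 t2 by linarith
  finally show ?thesis by (simp add: D_def)
qed

lemma Lga: assumes "B * v1 + s2 / 2 * v2 \<le> K * V" "0 \<le> K" "1 \<le> V" "0 \<le> (e::real)" "0 \<le> s2"
  shows "B * (v1 / (1 + e * V)\<^sup>2) + s2 / 2 * (v2 / (1 + e * V)\<^sup>2 - 2 * e * v1\<^sup>2 / (1 + e * V) ^ 3)
    \<le> K * (V / (1 + e * V))"
proof -
  define D where "D = 1 + e * V"
  have D: "1 \<le> D" using assms by (simp add: D_def)
  have "B * (v1 / D\<^sup>2) + s2 / 2 * (v2 / D\<^sup>2 - 2 * e * v1\<^sup>2 / D ^ 3)
      = (B * v1 + s2 / 2 * v2) / D\<^sup>2 - s2 * e * v1\<^sup>2 / D ^ 3"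
    using D by (simp add: field_simps)
  also have "\<dots> \<le> (B * v1 + s2 / 2 * v2) / D\<^sup>2"
    using assms D by (simp add: mult_nonneg_nonneg)
  also have "\<dots> \<le> K * V / D\<^sup>2" using assms D by (intro divide_right_mono) auto
  also have "\<dots> \<le> K * V / D" using assms D
    by (intro divide_left_mono) (auto simp: power2_eq_square)
  finally show ?thesis by (simp add: D_def)
qed

lemma g_facts:
  assumes a: "1 \<le> a" and e: "0 < e"
  shows "0 \<le> gf a e x" "gf a e x \<le> Vf a x" "gf a e x \<le> 1 / e"
    "\<bar>g1 a e x\<bar> \<le> 2 * a / e"
    "\<bar>g2 a e x\<bar> \<le> (2 * a + 4 * a * (a - 1)) / e + 8 * a\<^sup>2 / e"
proof -
  have V: "1 \<le> Vf a x" using Vf_ge1[of a x] a by simp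
  show "0 \<le> gf a e x" "gf a e x \<le> Vf a x" "gf a e x \<le> 1 / e" unfolding gf_def using gfa[OF V e] by auto
  show "\<bar>g1 a e x\<bar> \<le> 2 * a / e" unfolding g1_def using g1a[OF V1_bound V e] a by simp
  show "\<bar>g2 a e x\<bar> \<le> (2 * a + 4 * a * (a - 1)) / e + 8 * a\<^sup>2 / e" unfolding g2_def
    using g2a[OF V2_bounds(1,3)[OF a] V1_bound V e] a by (simp add: mult_nonneg_nonneg)
qed

lemma Lg_bound:
  assumes a: "1 \<le> a" and e: "0 \<le> e" and c1: "0 \<le> c1" and r: "0 \<le> r" "r \<le> 2"
    and B: "\<bar>B\<bar> \<le> c1 * (1 + \<bar>x\<bar>)" and s: "0 \<le> s2" "s2 \<le> c1 * (1 + mpow \<bar>x\<bar> r)"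
  shows "B * g1 a e x + s2 / 2 * g2 a e x \<le> c1 * (2 * a + 4 * a\<^sup>2) * gf a e x"
  unfolding g1_def g2_def gf_def
  using Lga[OF LV_bound[OF a c1 r B s] _ Vf_ge1 e s(1)] a c1 by simp

lemma cont_gf: "1 \<le> a \<Longrightarrow> 0 \<le> e \<Longrightarrow> continuous_on UNIV (gf a e)"
  using Dg[of e a] by (intro continuous_at_imp_continuous_on) (auto intro: DERIV_isCont)

lemma cont_g1: "1 \<le> a \<Longrightarrow> 0 \<le> e \<Longrightarrow> continuous_on UNIV (g1 a e)"
  using Dg1[of e a] by (intro continuous_at_imp_continuous_on) (auto intro: DERIV_isCont)

lemma cont_V2: "continuous_on UNIV (V2 a)"
proof -
  have "1 + x\<^sup>2 \<noteq> 0" for x :: real using w_pos[of x] by linarith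
  then show ?thesis unfolding V2_def[abs_def] by (intro continuous_intros) auto
qed

lemma cont_V1: "continuous_on UNIV (V1 a)"
  using DV1[of a] by (intro continuous_at_imp_continuous_on) (auto intro: DERIV_isCont)

lemma cont_Vf: "continuous_on UNIV (Vf a)"
  using DV[of a] by (intro continuous_at_imp_continuous_on) (auto intro: DERIV_isCont)

lemma cont_g2: assumes "1 \<le> a" "0 \<le> e" shows "continuous_on UNIV (g2 a e)"
proof -
  have D: "1 + e * Vf a x \<noteq> 0" for x using Vf_ge1[of a x] assms
    by (metis add_pos_nonneg less_numeral_extra(1) mult_nonneg_nonneg order.trans zero_le_one less_irrefl)
  show ?thesis unfolding g2_def[abs_def]
    using D by (intro continuous_intros cont_V2[THEN continuous_on_subset] cont_V1[THEN continuous_on_subset]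
        cont_Vf[THEN continuous_on_subset]) auto
qed

lemma cont_comp: "continuous_on UNIV g \<Longrightarrow> continuous_on A f \<Longrightarrow> continuous_on A (\<lambda>z. g (f z))"
  by (rule continuous_on_compose2[of UNIV g A f]) auto

lemma u_C12b:
  assumes a: "1 \<le> a" and e: "0 < e" and \<beta>: "0 \<le> \<beta>"
  shows "C12b T S (\<lambda>z. exp (- \<beta> * fst z) * gf a e (snd z))
                  (\<lambda>z. - \<beta> * (exp (- \<beta> * fst z) * gf a e (snd z)))
                  (\<lambda>z. exp (- \<beta> * fst z) * g1 a e (snd z))
                  (\<lambda>z. exp (- \<beta> * fst z) * g2 a e (snd z))"
proof -
  note gfa = g_facts[OF a e]
  have E: "exp (- \<beta> * t) \<le> 1" "0 \<le> exp (- \<beta> * t)" if "t \<in> {0..T}" for t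
    using that \<beta> by (auto simp: mult_nonneg_nonneg)
  have cg: "continuous_on UNIV (gf a e)" "continuous_on UNIV (g1 a e)" "continuous_on UNIV (g2 a e)"
    using cont_gf[OF a] cont_g1[OF a] cont_g2[OF a] e by auto
  show ?thesis unfolding C12b_def
  proof (intro conjI ballI)
    fix t x assume t: "t \<in> {0..T}" and x: "x \<in> S"
    show "((\<lambda>s. exp (- \<beta> * fst (s, x)) * gf a e (snd (s, x))) has_real_derivative
        - \<beta> * (exp (- \<beta> * fst (t, x)) * gf a e (snd (t, x)))) (at t within {0..T})"
    proof -
      have "DERIV (\<lambda>s. - \<beta> * s) t :> - \<beta> * 1" by (rule DERIV_cmult[OF DERIV_ident])
      from DERIV_fun_exp[OF this] have "DERIV (\<lambda>s. exp (- \<beta> * s)) t :> exp (- \<beta> * t) * (- \<beta> * 1)" .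
      from DERIV_cmult_right[OF this, of "gf a e x"]
      have "((\<lambda>s. exp (- \<beta> * s) * gf a e x) has_real_derivative exp (- \<beta> * t) * (- \<beta> * 1) * gf a e x) (at t within {0..T})"
        by (rule has_field_derivative_at_within)
      then show ?thesis by (simp add: algebra_simps)
    qed
    show "((\<lambda>y. exp (- \<beta> * fst (t, y)) * gf a e (snd (t, y))) has_real_derivative
        exp (- \<beta> * fst (t, x)) * g1 a e (snd (t, x))) (at x within S)"
    proof -
      have "((\<lambda>y. exp (- \<beta> * t) * gf a e y) has_real_derivative exp (- \<beta> * t) * g1 a e x) (at x within S)"
        using DERIV_cmult[OF Dg[of e a x], of "exp (- \<beta> * t)"] a e by (auto intro: has_field_derivative_at_within)
      then show ?thesis by simp
    qed
    show "((\<lambda>y. exp (- \<beta> * fst (t, y)) * g1 a e (snd (t, y))) has_real_derivative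
        exp (- \<beta> * fst (t, x)) * g2 a e (snd (t, x))) (at x within S)"
    proof -
      have "((\<lambda>y. exp (- \<beta> * t) * g1 a e y) has_real_derivative exp (- \<beta> * t) * g2 a e x) (at x within S)"
        using DERIV_cmult[OF Dg1[of e a x], of "exp (- \<beta> * t)"] a e by (auto intro: has_field_derivative_at_within)
      then show ?thesis by simp
    qed
  next
    show "continuous_on ({0..T} \<times> S) (\<lambda>z. exp (- \<beta> * fst z) * gf a e (snd z))"
      by (intro continuous_intros cont_comp[OF cg(1)])
    show "continuous_on ({0..T} \<times> S) (\<lambda>z. - \<beta> * (exp (- \<beta> * fst z) * gf a e (snd z)))"
      by (intro continuous_intros cont_comp[OF cg(1)])
    show "continuous_on ({0..T} \<times> S) (\<lambda>z. exp (- \<beta> * fst z) * g1 a e (snd z))"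
      by (intro continuous_intros cont_comp[OF cg(2)])
    show "continuous_on ({0..T} \<times> S) (\<lambda>z. exp (- \<beta> * fst z) * g2 a e (snd z))"
      by (intro continuous_intros cont_comp[OF cg(3)])
  next
    show "bounded ((\<lambda>z. exp (- \<beta> * fst z) * gf a e (snd z)) ` ({0..T} \<times> S))"
      unfolding bounded_iff
    proof (intro exI ballI)
      fix y assume "y \<in> (\<lambda>z. exp (- \<beta> * fst z) * gf a e (snd z)) ` ({0..T} \<times> S)"
      then obtain t x where t: "t \<in> {0..T}" and y: "y = exp (- \<beta> * t) * gf a e x" by auto
      have "\<bar>exp (- \<beta> * t) * gf a e x\<bar> \<le> 1 * (1 / e)"
        unfolding abs_mult using E[OF t] gfa by (intro mult_mono) auto
      then show "norm y \<le> 1 / e" using y by simp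
    qed
    show "bounded ((\<lambda>z. - \<beta> * (exp (- \<beta> * fst z) * gf a e (snd z))) ` ({0..T} \<times> S))"
      unfolding bounded_iff
    proof (intro exI ballI)
      fix y assume "y \<in> (\<lambda>z. - \<beta> * (exp (- \<beta> * fst z) * gf a e (snd z))) ` ({0..T} \<times> S)"
      then obtain z where z: "z \<in> {0..T} \<times> S" and y: "y = - \<beta> * (exp (- \<beta> * fst z) * gf a e (snd z))" by blast
      define t x where "t = fst z" and "x = snd z"
      have t: "t \<in> {0..T}" using z by (auto simp: t_def)
      have y: "y = - \<beta> * (exp (- \<beta> * t) * gf a e x)" using y by (simp add: t_def x_def)
      have "\<bar>exp (- \<beta> * t) * gf a e x\<bar> \<le> 1 * (1 / e)"
        unfolding abs_mult using E[OF t] gfa by (intro mult_mono) auto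
      then have "\<beta> * \<bar>exp (- \<beta> * t) * gf a e x\<bar> \<le> \<beta> * (1 / e)" using \<beta> by (intro mult_left_mono) auto
      then show "norm y \<le> \<beta> * (1 / e)" using y \<beta> by (simp add: abs_mult)
    qed
    show "bounded ((\<lambda>z. exp (- \<beta> * fst z) * g1 a e (snd z)) ` ({0..T} \<times> S))"
      unfolding bounded_iff
    proof (intro exI ballI)
      fix y assume "y \<in> (\<lambda>z. exp (- \<beta> * fst z) * g1 a e (snd z)) ` ({0..T} \<times> S)"
      then obtain t x where t: "t \<in> {0..T}" and y: "y = exp (- \<beta> * t) * g1 a e x" by auto
      have "\<bar>exp (- \<beta> * t) * g1 a e x\<bar> \<le> 1 * (2 * a / e)"
        unfolding abs_mult using E[OF t] gfa by (intro mult_mono) auto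
      then show "norm y \<le> 2 * a / e" using y by simp
    qed
    show "bounded ((\<lambda>z. exp (- \<beta> * fst z) * g2 a e (snd z)) ` ({0..T} \<times> S))"
      unfolding bounded_iff
    proof (intro exI ballI)
      fix y assume "y \<in> (\<lambda>z. exp (- \<beta> * fst z) * g2 a e (snd z)) ` ({0..T} \<times> S)"
      then obtain t x where t: "t \<in> {0..T}" and y: "y = exp (- \<beta> * t) * g2 a e x" by auto
      have "\<bar>exp (- \<beta> * t) * g2 a e x\<bar> \<le> 1 * ((2 * a + 4 * a * (a - 1)) / e + 8 * a\<^sup>2 / e)"
        unfolding abs_mult using E[OF t] gfa by (intro mult_mono) auto
      then show "norm y \<le> (2 * a + 4 * a * (a - 1)) / e + 8 * a\<^sup>2 / e" using y by simp
    qed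
  qed
qed

lemma pow_facts:
  assumes p: "1 \<le> p" and r: "0 \<le> r" "r \<le> p"
  shows "\<bar>x\<bar> \<le> 1 + \<bar>x\<bar> powr p" "mpow \<bar>x\<bar> r \<le> 1 + \<bar>x\<bar> powr p"
proof -
  have gen: "\<bar>x\<bar> powr s \<le> 1 + \<bar>x\<bar> powr p" if s: "0 \<le> s" "s \<le> p" for s
  proof (cases "\<bar>x\<bar> \<le> 1")
    case True
    then have "\<bar>x\<bar> powr s \<le> 1 powr s" using s by (intro powr_mono2) auto
    have "0 \<le> \<bar>x\<bar> powr p" by simp
    then show ?thesis using \<open>\<bar>x\<bar> powr s \<le> 1 powr s\<close> by (intro lin_h3) auto
  next
    case False
    then have "\<bar>x\<bar> powr s \<le> \<bar>x\<bar> powr p" using s by (intro powr_mono) auto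
    then show ?thesis by simp
  qed
  show "\<bar>x\<bar> \<le> 1 + \<bar>x\<bar> powr p"
  proof (cases "x = 0")
    case False then show ?thesis using gen[of 1] p by simp
  qed simp
  show "mpow \<bar>x\<bar> r \<le> 1 + \<bar>x\<bar> powr p"
    using gen[of r] r by (auto simp: mpow_def)
qed


lemma h_growth:
  assumes "\<bar>U0\<bar> \<le> A0" "\<bar>U1\<bar> \<le> A1" "\<bar>U2\<bar> \<le> A2" "\<bar>B\<bar> \<le> c1 * (1 + \<bar>x\<bar>)"
    "0 \<le> s2" "s2 \<le> c1 * (1 + mpow \<bar>x\<bar> r)" "1 \<le> p" "0 \<le> r" "r \<le> p" "0 \<le> (c1::real)"
  shows "\<bar>U0 + B * U1 + s2 / 2 * U2\<bar> \<le> (A0 + 2 * c1 * A1 + c1 * A2) * (1 + \<bar>x\<bar> powr p)"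
proof -
  note pf = pow_facts[OF assms(7-9), of x]
  have P: "0 \<le> \<bar>x\<bar> powr p" by simp
  have A: "0 \<le> A0" "0 \<le> A1" "0 \<le> A2" using assms(1-3) by auto
  have t0: "\<bar>U0\<bar> \<le> A0 * (1 + \<bar>x\<bar> powr p)"
  proof -
    have "A0 * 1 \<le> A0 * (1 + \<bar>x\<bar> powr p)" using A P by (intro mult_left_mono) auto
    then show ?thesis using assms(1) by linarith
  qed
  have "\<bar>B * U1\<bar> \<le> c1 * (1 + \<bar>x\<bar>) * A1" unfolding abs_mult
    using assms(2,4,10) A by (intro mult_mono) auto
  also have "\<dots> \<le> c1 * (2 * (1 + \<bar>x\<bar> powr p)) * A1"
  proof -
    have "1 + \<bar>x\<bar> \<le> 2 * (1 + \<bar>x\<bar> powr p)" using pf(1) P by (rule lin_h1)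
    then show ?thesis using A assms(10) by (intro mult_right_mono mult_left_mono) auto
  qed
  finally have t1: "\<bar>B * U1\<bar> \<le> 2 * c1 * A1 * (1 + \<bar>x\<bar> powr p)" by (simp add: algebra_simps)
  have "\<bar>s2 / 2 * U2\<bar> \<le> c1 * (1 + mpow \<bar>x\<bar> r) / 2 * A2" unfolding abs_mult
    using assms(3,5,6,10) A by (intro mult_mono) auto
  also have "\<dots> \<le> c1 * (2 * (1 + \<bar>x\<bar> powr p)) / 2 * A2"
  proof -
    have "1 + mpow \<bar>x\<bar> r \<le> 2 * (1 + \<bar>x\<bar> powr p)" using pf(2) P by (rule lin_h1)
    then show ?thesis using A assms(10) by (intro mult_right_mono mult_left_mono divide_right_mono) auto
  qed
  finally have t2: "\<bar>s2 / 2 * U2\<bar> \<le> c1 * A2 * (1 + \<bar>x\<bar> powr p)" by (simp add: algebra_simps)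
  have "\<bar>U0 + B * U1 + s2 / 2 * U2\<bar> \<le> \<bar>U0\<bar> + \<bar>B * U1\<bar> + \<bar>s2 / 2 * U2\<bar>" by linarith
  also have "\<dots> \<le> (A0 + 2 * c1 * A1 + c1 * A2) * (1 + \<bar>x\<bar> powr p)"
    using t0 t1 t2 by (simp add: algebra_simps)
  finally show ?thesis .
qed

lemma V_le_q:
  assumes q: "0 \<le> q"
  shows "Vf (q / 2) x \<le> 2 powr (q / 2) * (1 + \<bar>x\<bar> powr q)"
proof (cases "x\<^sup>2 \<le> 1")
  case True
  then have "(1 + x\<^sup>2) powr (q / 2) \<le> 2 powr (q / 2)" using q by (intro powr_mono2) auto
  also have "\<dots> \<le> 2 powr (q / 2) * (1 + \<bar>x\<bar> powr q)" by simp
  finally show ?thesis by (simp add: Vf_def)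
next
  case False
  then have x0: "0 < \<bar>x\<bar>" by auto
  have "(1 + x\<^sup>2) powr (q / 2) \<le> (2 * x\<^sup>2) powr (q / 2)" using q False by (intro powr_mono2) auto
  also have "\<dots> = 2 powr (q / 2) * (x\<^sup>2) powr (q / 2)" by (simp add: powr_mult)
  also have "(x\<^sup>2) powr (q / 2) = \<bar>x\<bar> powr q"
  proof -
    have e: "\<bar>x\<bar> powr 2 = x\<^sup>2" using x0 by (simp add: powr_numeral)
    have "(x\<^sup>2) powr (q / 2) = (\<bar>x\<bar> powr 2) powr (q / 2)" by (simp only: e)
    also have "\<dots> = \<bar>x\<bar> powr (2 * (q / 2))" by (rule powr_powr)
    also have "\<dots> = \<bar>x\<bar> powr q" by simp
    finally show ?thesis .
  qed
  also have "2 powr (q / 2) * \<bar>x\<bar> powr q \<le> 2 powr (q / 2) * (1 + \<bar>x\<bar> powr q)" by simp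
  finally show ?thesis by (simp add: Vf_def)
qed

lemma cont_meas_restrict:
  fixes f :: "real \<times> real \<Rightarrow> real"
  shows "continuous_on UNIV f \<Longrightarrow> f \<in> borel_measurable (restrict_space borel A)"
  by (intro measurable_restrict_space1 borel_measurable_continuous_onI)

lemma moment_eps:
  fixes T p q r c1 e :: real and Ob :: "real set" and m0 :: "real measure"
    and b \<sigma> :: "real \<Rightarrow> real \<Rightarrow> real"
    and \<mu> :: "(real \<times> real) measure" and m :: "real \<Rightarrow> real measure"
  assumes T: "0 < T" and q: "2 \<le> q" and r: "0 \<le> r" "r \<le> 2" and p: "p \<ge> max 1 r"
    and c1: "0 \<le> c1"
    and m0: "prob_space m0" "sets m0 = sets borel" "integrable m0 (\<lambda>x. \<bar>x\<bar> powr q)"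
    and bm: "(\<lambda>z. b (fst z) (snd z)) \<in> borel_measurable (restrict_space borel ({0..T} \<times> UNIV))"
    and sm: "(\<lambda>z. \<sigma> (fst z) (snd z)) \<in> borel_measurable (restrict_space borel ({0..T} \<times> UNIV))"
    and bg: "\<forall>t\<in>{0..T}. \<forall>x. \<bar>b t x\<bar> \<le> c1 * (1 + \<bar>x\<bar>)"
    and sg: "\<forall>t\<in>{0..T}. \<forall>x. (\<sigma> t x)\<^sup>2 \<le> c1 * (1 + mpow \<bar>x\<bar> r)"
    and R: "inR p T Ob m0 b \<sigma> \<mu> m"
    and e: "0 < e"
  shows "(\<integral>\<^sup>+t. indicator {0..T} t * (\<integral>\<^sup>+x. indicator (closure Ob) x * ennreal (gf (q / 2) e x) \<partial>m t) \<partial>lborel)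
     \<le> ennreal (exp ((c1 * (2 * (q / 2) + 4 * (q / 2)\<^sup>2) + 1) * T) * (2 powr (q / 2) * (1 + (LINT x|m0. \<bar>x\<bar> powr q))))"
proof -
  define a where "a = q / 2"
  have a: "1 \<le> a" using q by (simp add: a_def)
  define K where "K = c1 * (2 * a + 4 * a\<^sup>2)"
  have K: "0 \<le> K" using c1 a by (simp add: K_def)
  define \<beta> where "\<beta> = K + 1"
  have \<beta>: "0 \<le> \<beta>" using K by (simp add: \<beta>_def)
  define S where "S = closure Ob"
  have cl: "closed S" by (simp add: S_def)
  define A0 where "A0 = 2 powr a * (1 + (LINT x|m0. \<bar>x\<bar> powr q))"
  define u where "u = (\<lambda>z::real\<times>real. exp (- \<beta> * fst z) * gf a e (snd z))"
  define ut where "ut = (\<lambda>z::real\<times>real. - \<beta> * (exp (- \<beta> * fst z) * gf a e (snd z)))"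
  define ux where "ux = (\<lambda>z::real\<times>real. exp (- \<beta> * fst z) * g1 a e (snd z))"
  define uxx where "uxx = (\<lambda>z::real\<times>real. exp (- \<beta> * fst z) * g2 a e (snd z))"
  have C: "C12b T S u ut ux uxx" unfolding u_def ut_def ux_def uxx_def by (rule u_C12b[OF a e \<beta>])
  have Vp: "Vp p T S m" using R by (simp add: inR_def S_def)
  have eq: "(LINT z:({0..T} \<times> S)|\<mu>. u z) = (LINT x:Ob|m0. u (0, x))
      + (LINT t:{0..T}|lborel. (LINT x:S|m t. ut (t, x) + b t x * ux (t, x) + (\<sigma> t x)\<^sup>2 / 2 * uxx (t, x)))"
    using R C by (simp add: inR_def S_def)
  define hz where "hz = (\<lambda>z. ut z + b (fst z) (snd z) * ux z + (\<sigma> (fst z) (snd z))\<^sup>2 / 2 * uxx z)"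
  have eq2: "(LINT z:({0..T} \<times> S)|\<mu>. u z) = (LINT x:Ob|m0. u (0, x))
      + (LINT t:{0..T}|lborel. (LINT x:S|m t. hz (t, x)))"
    using eq by (simp add: hz_def)
  note gfs = g_facts[OF a e]
  have E: "exp (- \<beta> * t) \<le> 1" "0 \<le> exp (- \<beta> * t)" "exp (- \<beta> * T) \<le> exp (- \<beta> * t)"
    if "t \<in> {0..T}" for t
    using that \<beta> by (auto simp: mult_nonneg_nonneg mult_left_mono)
  have cg: "continuous_on UNIV (gf a e)" "continuous_on UNIV (g1 a e)" "continuous_on UNIV (g2 a e)"
    using cont_gf[OF a] cont_g1[OF a] cont_g2[OF a] e by auto
  have [measurable]: "ut \<in> borel_measurable (restrict_space borel ({0..T} \<times> S))"
    unfolding ut_def by (intro cont_meas_restrict continuous_intros cont_comp[OF cg(1)])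
  have [measurable]: "ux \<in> borel_measurable (restrict_space borel ({0..T} \<times> S))"
    unfolding ux_def by (intro cont_meas_restrict continuous_intros cont_comp[OF cg(2)])
  have [measurable]: "uxx \<in> borel_measurable (restrict_space borel ({0..T} \<times> S))"
    unfolding uxx_def by (intro cont_meas_restrict continuous_intros cont_comp[OF cg(3)])
  have [measurable]: "(\<lambda>z. b (fst z) (snd z)) \<in> borel_measurable (restrict_space borel ({0..T} \<times> S))"
    by (rule measurable_restrict_mono[OF bm]) auto
  have [measurable]: "(\<lambda>z. \<sigma> (fst z) (snd z)) \<in> borel_measurable (restrict_space borel ({0..T} \<times> S))"
    by (rule measurable_restrict_mono[OF sm]) auto
  have hm: "hz \<in> borel_measurable (restrict_space borel ({0..T} \<times> S))"
    unfolding hz_def by measurable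
  define cneg where "cneg = - exp (- \<beta> * T)"
  have cneg: "\<bar>cneg\<bar> \<le> 1" "cneg \<le> 0" using E(1,2)[of T] T by (auto simp: cneg_def)
  define gz where "gz = (\<lambda>z::real\<times>real. cneg * gf a e (snd z))"
  define gp where "gp = (\<lambda>z::real\<times>real. gf a e (snd z))"
  have gzm: "gz \<in> borel_measurable (restrict_space borel ({0..T} \<times> S))"
    unfolding gz_def by (intro cont_meas_restrict continuous_intros cont_comp[OF cg(1)])
  have gpm: "gp \<in> borel_measurable (restrict_space borel ({0..T} \<times> S))"
    unfolding gp_def by (intro cont_meas_restrict continuous_intros cont_comp[OF cg(1)])
  have p1: "1 \<le> p" "0 \<le> r" "r \<le> p" using p r by auto
  define Ch where "Ch = \<beta> * (1 / e) + 2 * c1 * (2 * a / e) + c1 * ((2 * a + 4 * a * (a - 1)) / e + 8 * a\<^sup>2 / e)"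
  have hg: "\<forall>t\<in>{0..T}. \<forall>x\<in>S. \<bar>hz (t,x)\<bar> \<le> Ch * (1 + \<bar>x\<bar> powr p)"
  proof (intro ballI)
    fix t x assume t: "t \<in> {0..T}" and x: "x \<in> S"
    have b0: "\<bar>ut (t,x)\<bar> \<le> \<beta> * (1 / e)"
    proof -
      have "\<bar>exp (- \<beta> * t) * gf a e x\<bar> \<le> 1 * (1 / e)"
        unfolding abs_mult using E[OF t] gfs by (intro mult_mono) auto
      then have "\<beta> * \<bar>exp (- \<beta> * t) * gf a e x\<bar> \<le> \<beta> * (1 / e)" using \<beta> by (intro mult_left_mono) auto
      then show ?thesis using \<beta> by (simp add: ut_def abs_mult)
    qed
    have b1: "\<bar>ux (t,x)\<bar> \<le> 2 * a / e"
    proof -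
      have "\<bar>exp (- \<beta> * t) * g1 a e x\<bar> \<le> 1 * (2 * a / e)"
        unfolding abs_mult using E[OF t] gfs by (intro mult_mono) auto
      then show ?thesis by (simp add: ux_def)
    qed
    have b2: "\<bar>uxx (t,x)\<bar> \<le> (2 * a + 4 * a * (a - 1)) / e + 8 * a\<^sup>2 / e"
    proof -
      have "\<bar>exp (- \<beta> * t) * g2 a e x\<bar> \<le> 1 * ((2 * a + 4 * a * (a - 1)) / e + 8 * a\<^sup>2 / e)"
        unfolding abs_mult using E[OF t] gfs by (intro mult_mono) auto
      then show ?thesis by (simp add: uxx_def)
    qed
    show "\<bar>hz (t,x)\<bar> \<le> Ch * (1 + \<bar>x\<bar> powr p)"
    proof -
      have bgx: "\<bar>b t x\<bar> \<le> c1 * (1 + \<bar>x\<bar>)" using bg t by simp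
      have sgx: "(\<sigma> t x)\<^sup>2 \<le> c1 * (1 + mpow \<bar>x\<bar> r)" using sg t by simp
      have sgn: "0 \<le> (\<sigma> t x)\<^sup>2" by simp
      show ?thesis unfolding hz_def Ch_def using h_growth[OF b0 b1 b2 bgx sgn sgx p1 c1] by simp
    qed
  qed
  have gzg: "\<forall>t\<in>{0..T}. \<forall>x\<in>S. \<bar>gz (t,x)\<bar> \<le> (1 / e) * (1 + \<bar>x\<bar> powr p)"
  proof (intro ballI)
    fix t x
    have "\<bar>cneg * gf a e x\<bar> \<le> 1 * (1 / e)" unfolding abs_mult using cneg gfs by (intro mult_mono) auto
    also have "\<dots> \<le> (1 / e) * (1 + \<bar>x\<bar> powr p)"
    proof -
      have "1 / e \<le> (1 + \<bar>x\<bar> powr p) / e" using e by (intro divide_right_mono) auto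
      then show ?thesis by simp
    qed
    finally show "\<bar>gz (t,x)\<bar> \<le> (1 / e) * (1 + \<bar>x\<bar> powr p)" by (simp add: gz_def)
  qed
  have gpg: "\<forall>t\<in>{0..T}. \<forall>x\<in>S. \<bar>gp (t,x)\<bar> \<le> (1 / e) * (1 + \<bar>x\<bar> powr p)"
  proof (intro ballI)
    fix t x
    have "\<bar>gf a e x\<bar> \<le> (1 / e)" using gfs by simp
    also have "\<dots> \<le> (1 / e) * (1 + \<bar>x\<bar> powr p)"
    proof -
      have "1 / e \<le> (1 + \<bar>x\<bar> powr p) / e" using e by (intro divide_right_mono) auto
      then show ?thesis by simp
    qed
    finally show "\<bar>gp (t,x)\<bar> \<le> (1 / e) * (1 + \<bar>x\<bar> powr p)" by (simp add: gp_def)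
  qed
  have pw: "hz (t,x) \<le> gz (t,x)" if t: "t \<in> {0..T}" for t x
  proof -
    have L: "b t x * g1 a e x + (\<sigma> t x)\<^sup>2 / 2 * g2 a e x \<le> K * gf a e x"
      unfolding K_def using Lg_bound[OF a _ c1 r, of e "b t x" x "(\<sigma> t x)\<^sup>2"] e bg sg t by simp
    have "hz (t,x) = exp (- \<beta> * t) * (b t x * g1 a e x + (\<sigma> t x)\<^sup>2 / 2 * g2 a e x - \<beta> * gf a e x)"
      by (simp add: hz_def ut_def ux_def uxx_def algebra_simps)
    also have "\<dots> \<le> exp (- \<beta> * t) * (K * gf a e x - \<beta> * gf a e x)"
      using L by (intro mult_left_mono) auto
    also have "\<dots> = - (exp (- \<beta> * t) * gf a e x)" by (simp add: \<beta>_def algebra_simps)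
    also have "\<dots> \<le> - (exp (- \<beta> * T) * gf a e x)"
      using E[OF t] gfs by (simp add: mult_right_mono)
    finally show ?thesis by (simp add: gz_def cneg_def)
  qed
  have Iout: "(LINT t:{0..T}|lborel. (LINT x:S|m t. hz (t, x))) \<le> (LINT t:{0..T}|lborel. (LINT x:S|m t. gz (t, x)))"
  proof (rule set_integral_mono_AE)
    show "set_integrable lborel {0..T} (\<lambda>t. LINT x:S|m t. hz (t, x))"
      by (rule outer_integrable[OF Vp hm cl hg])
    show "set_integrable lborel {0..T} (\<lambda>t. LINT x:S|m t. gz (t, x))"
      by (rule outer_integrable[OF Vp gzm cl gzg])
    show "AE t\<in>{0..T} in lborel. (LINT x:S|m t. hz (t, x)) \<le> (LINT x:S|m t. gz (t, x))"
      using Vp_AE[OF Vp]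
    proof eventually_elim
      case (elim t)
      show ?case
      proof
        assume t: "t \<in> {0..T}"
        then have fin: "(\<integral>\<^sup>+x. ennreal (\<bar>x\<bar> powr p) \<partial>m t) < \<infinity>" using elim by simp
        show "(LINT x:S|m t. hz (t, x)) \<le> (LINT x:S|m t. gz (t, x))"
        proof (rule set_integral_mono)
          show "set_integrable (m t) S (\<lambda>x. hz (t, x))"
            using inner_integrable[OF Vp t hm cl hg fin] by (simp add: set_integrable_def)
          show "set_integrable (m t) S (\<lambda>x. gz (t, x))"
            using inner_integrable[OF Vp t gzm cl gzg fin] by (simp add: set_integrable_def)
        qed (rule pw[OF t])
      qed
    qed
  qed
  define G where "G t = (LINT x:S|m t. gf a e x)" for t
  define Gout where "Gout = (LINT t:{0..T}|lborel. G t)"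
  have gzG: "(LINT t:{0..T}|lborel. (LINT x:S|m t. gz (t, x))) = cneg * Gout"
    by (simp add: gz_def G_def Gout_def)
  have lhs: "0 \<le> (LINT z:({0..T} \<times> S)|\<mu>. u z)"
    unfolding set_lebesgue_integral_def
    by (rule integral_nonneg_AE) (use gfs in \<open>auto simp: u_def intro!: AE_I2\<close>)
  have m0t: "(LINT x:Ob|m0. u (0, x)) \<le> A0"
  proof -
    interpret m0p: prob_space m0 by (rule m0(1))
    have [measurable_cong]: "sets m0 = sets borel" by (rule m0(2))
    have Aq: "0 \<le> (LINT x|m0. \<bar>x\<bar> powr q)" by (rule integral_nonneg_AE) auto
    have "ennreal \<bar>LINT x:Ob|m0. u (0, x)\<bar> \<le> (\<integral>\<^sup>+x. ennreal (norm (indicator Ob x * u (0, x))) \<partial>m0)"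
      using norm_integral_le_nn[of m0 "\<lambda>x. indicator Ob x * u (0, x)"]
      by (simp add: set_lebesgue_integral_def)
    also have "\<dots> \<le> (\<integral>\<^sup>+x. ennreal (2 powr a) * (1 + ennreal (\<bar>x\<bar> powr q)) \<partial>m0)"
    proof (rule nn_integral_mono)
      fix x
      have "norm (indicator Ob x * u (0, x)) \<le> gf a e x"
        using gfs by (auto simp: u_def indicator_def)
      also have "\<dots> \<le> Vf a x" using gfs by simp
      also have "\<dots> \<le> 2 powr a * (1 + \<bar>x\<bar> powr q)" unfolding a_def using V_le_q q by simp
      finally have "ennreal (norm (indicator Ob x * u (0, x))) \<le> ennreal (2 powr a * (1 + \<bar>x\<bar> powr q))"
        by (rule ennreal_leI)
      then show "ennreal (norm (indicator Ob x * u (0, x))) \<le> ennreal (2 powr a) * (1 + ennreal (\<bar>x\<bar> powr q))"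
        by (simp add: ennreal_mult ennreal_plus)
    qed
    also have "\<dots> = ennreal (2 powr a) * (\<integral>\<^sup>+x. 1 + ennreal (\<bar>x\<bar> powr q) \<partial>m0)"
      by (rule nn_integral_cmult) measurable
    also have "(\<integral>\<^sup>+x. 1 + ennreal (\<bar>x\<bar> powr q) \<partial>m0) = 1 + (\<integral>\<^sup>+x. ennreal (\<bar>x\<bar> powr q) \<partial>m0)"
      by (subst nn_integral_add) (auto simp: m0p.emeasure_space_1)
    also have "(\<integral>\<^sup>+x. ennreal (\<bar>x\<bar> powr q) \<partial>m0) = ennreal (LINT x|m0. \<bar>x\<bar> powr q)"
      by (rule nn_integral_eq_integral[OF m0(3)]) auto
    also have "ennreal (2 powr a) * (1 + ennreal (LINT x|m0. \<bar>x\<bar> powr q)) = ennreal A0"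
      using Aq by (simp add: A0_def ennreal_mult ennreal_plus)
    finally have "\<bar>LINT x:Ob|m0. u (0, x)\<bar> \<le> A0"
      using Aq by (simp add: A0_def ennreal_le_iff)
    then show ?thesis by simp
  qed
  have "0 \<le> A0 + cneg * Gout" using lhs eq2 m0t Iout gzG by linarith
  then have "exp (- \<beta> * T) * Gout \<le> A0" by (simp add: cneg_def)
  then have "exp (\<beta> * T) * (exp (- \<beta> * T) * Gout) \<le> exp (\<beta> * T) * A0" by (intro mult_left_mono) auto
  then have Gb: "Gout \<le> exp (\<beta> * T) * A0" by (simp add: exp_minus_inverse mult.assoc[symmetric] exp_add[symmetric])
  have Gint: "set_integrable lborel {0..T} G"
    using outer_integrable[OF Vp gpm cl gpg] by (simp add: gp_def G_def[abs_def])
  have Gnn: "0 \<le> G t" for t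
    unfolding G_def set_lebesgue_integral_def
    by (rule integral_nonneg_AE) (use gfs in \<open>auto intro!: AE_I2\<close>)
  have Gi2: "integrable lborel (\<lambda>t. indicator {0..T} t * G t)" using Gint by (simp add: set_integrable_def)
  have "(\<integral>\<^sup>+t. ennreal (indicator {0..T} t * G t) \<partial>lborel) = ennreal (integral\<^sup>L lborel (\<lambda>t. indicator {0..T} t * G t))"
    using Gnn by (intro nn_integral_eq_integral[OF Gi2]) auto
  also have "integral\<^sup>L lborel (\<lambda>t. indicator {0..T} t * G t) = Gout"
    by (simp add: Gout_def set_lebesgue_integral_def)
  finally have "(\<integral>\<^sup>+t. ennreal (indicator {0..T} t * G t) \<partial>lborel) = ennreal Gout" .
  moreover have "(\<integral>\<^sup>+t. indicator {0..T} t * (\<integral>\<^sup>+x. indicator S x * ennreal (gf a e x) \<partial>m t) \<partial>lborel)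
      = (\<integral>\<^sup>+t. ennreal (indicator {0..T} t * G t) \<partial>lborel)"
  proof (rule nn_integral_cong_AE)
    show "AE t in lborel. indicator {0..T} t * (\<integral>\<^sup>+x. indicator S x * ennreal (gf a e x) \<partial>m t)
        = ennreal (indicator {0..T} t * G t)"
      using Vp_AE[OF Vp]
    proof eventually_elim
      case (elim t)
      show ?case
      proof (cases "t \<in> {0..T}")
        case t: True
        then have fin: "(\<integral>\<^sup>+x. ennreal (\<bar>x\<bar> powr p) \<partial>m t) < \<infinity>" using elim by simp
        have ii: "integrable (m t) (\<lambda>x. indicator S x * gf a e x)"
          using inner_integrable[OF Vp t gpm cl gpg fin] by (simp add: gp_def)
        have "ennreal (G t) = (\<integral>\<^sup>+x. ennreal (indicator S x * gf a e x) \<partial>m t)"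
          unfolding G_def set_lebesgue_integral_def
          using ii gfs by (subst nn_integral_eq_integral) auto
        also have "\<dots> = (\<integral>\<^sup>+x. indicator S x * ennreal (gf a e x) \<partial>m t)"
          by (intro nn_integral_cong) (auto split: split_indicator)
        finally show ?thesis using t by simp
      qed simp
    qed
  qed
  ultimately have "(\<integral>\<^sup>+t. indicator {0..T} t * (\<integral>\<^sup>+x. indicator S x * ennreal (gf a e x) \<partial>m t) \<partial>lborel)
      \<le> ennreal (exp (\<beta> * T) * A0)"
    using Gb by (simp add: ennreal_leI)
  then show ?thesis by (simp add: S_def a_def \<beta>_def K_def A0_def)
qed

lemma gf_SUP:
  assumes a: "1 \<le> a"
  shows "(SUP n. ennreal (gf a (1 / Suc n) x)) = ennreal (Vf a x)"
    "incseq (\<lambda>n. gf a (1 / Suc n) x)"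
proof -
  have V: "1 \<le> Vf a x" using Vf_ge1[of a x] a by simp
  show inc: "incseq (\<lambda>n. gf a (1 / Suc n) x)"
  proof (rule incseq_SucI)
    fix n
    have "1 / real (Suc (Suc n)) \<le> 1 / real (Suc n)" by (intro divide_left_mono) auto
    then have "1 + (1 / real (Suc (Suc n))) * Vf a x \<le> 1 + (1 / real (Suc n)) * Vf a x"
      using V by (intro add_left_mono mult_right_mono) auto
    moreover have "0 < 1 + (1 / real (Suc (Suc n))) * Vf a x" using V by (intro add_pos_nonneg) auto
    ultimately show "gf a (1 / Suc n) x \<le> gf a (1 / Suc (Suc n)) x"
      unfolding gf_def using V by (intro divide_left_mono) (auto intro: mult_pos_pos)
  qed
  have "(\<lambda>n. gf a (1 / Suc n) x) \<longlonglongrightarrow> Vf a x / (1 + 0 * Vf a x)"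
    unfolding gf_def
    by (intro tendsto_intros LIMSEQ_inverse_real_of_nat[unfolded inverse_eq_divide]) auto
  then have l: "(\<lambda>n. ennreal (gf a (1 / Suc n) x)) \<longlonglongrightarrow> ennreal (Vf a x)"
    by (intro tendsto_ennrealI) simp
  have "incseq (\<lambda>n. ennreal (gf a (1 / Suc n) x))"
    using inc by (auto simp: incseq_def intro: ennreal_leI)
  from LIMSEQ_unique[OF LIMSEQ_SUP[OF this] l] show "(SUP n. ennreal (gf a (1 / Suc n) x)) = ennreal (Vf a x)" .
qed

lemma moment_bound:
  fixes T p q r c1 :: real and Ob :: "real set" and m0 :: "real measure"
    and b \<sigma> :: "real \<Rightarrow> real \<Rightarrow> real"
    and \<mu> :: "(real \<times> real) measure" and m :: "real \<Rightarrow> real measure"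
  assumes T: "0 < T" and q: "2 \<le> q" and r: "0 \<le> r" "r \<le> 2" and p: "p \<ge> max 1 r"
    and c1: "0 \<le> c1"
    and m0: "prob_space m0" "sets m0 = sets borel" "integrable m0 (\<lambda>x. \<bar>x\<bar> powr q)"
    and bm: "(\<lambda>z. b (fst z) (snd z)) \<in> borel_measurable (restrict_space borel ({0..T} \<times> UNIV))"
    and sm: "(\<lambda>z. \<sigma> (fst z) (snd z)) \<in> borel_measurable (restrict_space borel ({0..T} \<times> UNIV))"
    and bg: "\<forall>t\<in>{0..T}. \<forall>x. \<bar>b t x\<bar> \<le> c1 * (1 + \<bar>x\<bar>)"
    and sg: "\<forall>t\<in>{0..T}. \<forall>x. (\<sigma> t x)\<^sup>2 \<le> c1 * (1 + mpow \<bar>x\<bar> r)"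
    and R: "inR p T Ob m0 b \<sigma> \<mu> m"
  shows "(\<integral>\<^sup>+t. indicator {0..T} t * (\<integral>\<^sup>+x. indicator (closure Ob) x * ennreal (Vf (q / 2) x) \<partial>m t) \<partial>lborel)
     \<le> ennreal (exp ((c1 * (2 * (q / 2) + 4 * (q / 2)\<^sup>2) + 1) * T) * (2 powr (q / 2) * (1 + (LINT x|m0. \<bar>x\<bar> powr q))))"
    (is "_ \<le> ennreal ?K")
proof -
  define a where "a = q / 2"
  have a: "1 \<le> a" using q by (simp add: a_def)
  define S where "S = closure Ob"
  have Sb: "S \<in> sets borel" by (simp add: S_def)
  have Vp: "Vp p T S m" using R by (simp add: inR_def S_def)
  define F where "F n t = indicator {0..T} t * (\<integral>\<^sup>+x. indicator S x * ennreal (gf a (1 / Suc n) x) \<partial>m t)" for n t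
  have cg: "continuous_on UNIV (gf a (1 / Suc n))" for n using cont_gf[OF a] by simp
  have gm[measurable]: "gf a (1 / Suc n) \<in> borel_measurable borel" for n
    using cg by (rule borel_measurable_continuous_onI)
  have Vm[measurable]: "Vf a \<in> borel_measurable borel"
    using cont_Vf by (rule borel_measurable_continuous_onI)
  have Fm0: "F n \<in> borel_measurable borel" for n
    unfolding F_def by (rule nnmom_meas[OF Vp]) (use Sb in measurable)
  have Fm: "F n \<in> borel_measurable lborel" for n
    using Fm0[of n] by simp
  have inc_g: "incseq (\<lambda>n x. indicator S x * ennreal (gf a (1 / Suc n) x))"
    using gf_SUP(2)[OF a] by (auto simp: incseq_def le_fun_def intro!: mult_left_mono ennreal_leI)
  have Finc: "incseq F"
    unfolding incseq_def le_fun_def F_def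
  proof (intro allI impI)
    fix n n' :: nat and t assume "n \<le> n'"
    show "indicator {0..T} t * (\<integral>\<^sup>+x. indicator S x * ennreal (gf a (1 / Suc n) x) \<partial>m t)
        \<le> indicator {0..T} t * (\<integral>\<^sup>+x. indicator S x * ennreal (gf a (1 / Suc n') x) \<partial>m t)"
    proof (rule mult_left_mono[OF nn_integral_mono])
      fix x
      have "gf a (1 / Suc n) x \<le> gf a (1 / Suc n') x" using gf_SUP(2)[OF a, of x] \<open>n \<le> n'\<close>
        by (simp add: incseq_def)
      then show "indicator S x * ennreal (gf a (1 / Suc n) x) \<le> indicator S x * ennreal (gf a (1 / Suc n') x)"
        by (intro mult_left_mono ennreal_leI) auto
    qed simp
  qed
  have pt: "indicator {0..T} t * (\<integral>\<^sup>+x. indicator S x * ennreal (Vf a x) \<partial>m t) = (SUP n. F n t)" for t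
  proof (cases "t \<in> {0..T}")
    case t: True
    have [measurable_cong]: "sets (m t) = sets borel" using Vp_sets[OF Vp t] by simp
    have "(\<integral>\<^sup>+x. indicator S x * ennreal (Vf a x) \<partial>m t)
        = (\<integral>\<^sup>+x. (SUP n. indicator S x * ennreal (gf a (1 / Suc n) x)) \<partial>m t)"
      by (intro nn_integral_cong) (simp add: SUP_mult_left_ennreal[symmetric] gf_SUP(1)[OF a, simplified])
    also have "\<dots> = (SUP n. (\<integral>\<^sup>+x. indicator S x * ennreal (gf a (1 / Suc n) x) \<partial>m t))"
      by (rule nn_integral_monotone_convergence_SUP[OF inc_g]) (use Sb in measurable)
    finally show ?thesis using t by (simp add: F_def)
  next
    case False then show ?thesis by (simp add: F_def)
  qed
  have "(\<integral>\<^sup>+t. indicator {0..T} t * (\<integral>\<^sup>+x. indicator S x * ennreal (Vf a x) \<partial>m t) \<partial>lborel)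
      = (\<integral>\<^sup>+t. (SUP n. F n t) \<partial>lborel)" by (simp add: pt)
  also have "\<dots> = (SUP n. integral\<^sup>N lborel (F n))"
    by (rule nn_integral_monotone_convergence_SUP[OF Finc Fm])
  also have "\<dots> \<le> ennreal ?K"
  proof (rule SUP_least)
    fix n :: nat
    have e: "0 < 1 / real (Suc n)" by simp
    show "integral\<^sup>N lborel (F n) \<le> ennreal ?K"
      unfolding F_def S_def a_def using moment_eps[OF T q r p c1 m0 bm sm bg sg R e] by simp
  qed
  finally show ?thesis by (simp add: S_def a_def)
qed

lemma inner_const_bound:
  fixes \<psi> :: "real \<times> real \<Rightarrow> real"
  assumes Vp: "Vp p T S m" and t: "t \<in> {0..T}" and B: "0 \<le> B"
    and g: "\<forall>x\<in>S. \<bar>\<psi> (t,x)\<bar> \<le> B"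
  shows "\<bar>LINT x:S|m t. \<psi> (t,x)\<bar> \<le> B"
proof -
  have "ennreal \<bar>LINT x:S|m t. \<psi> (t,x)\<bar> \<le> (\<integral>\<^sup>+x. ennreal (norm (indicator S x * \<psi> (t,x))) \<partial>m t)"
    using norm_integral_le_nn[of "m t" "\<lambda>x. indicator S x * \<psi> (t,x)"]
    by (simp add: set_lebesgue_integral_def)
  also have "\<dots> \<le> (\<integral>\<^sup>+x. ennreal B \<partial>m t)"
    using g B by (intro nn_integral_mono) (auto simp: indicator_def intro!: ennreal_leI)
  also have "\<dots> = ennreal B * emeasure (m t) UNIV" using Vp_sets[OF Vp t] by simp
  also have "\<dots> \<le> ennreal B * 1" using Vp_sets(3)[OF Vp t] by (intro mult_left_mono) auto
  finally show ?thesis using B by (simp add: ennreal_le_iff)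
qed

lemma absq_le_V: assumes "0 \<le> q" shows "\<bar>x\<bar> powr q \<le> Vf (q / 2) x"
proof (cases "x = 0")
  case True then show ?thesis using Vf_ge1[of "q/2" x] assms by simp
next
  case False
  then have x0: "0 < \<bar>x\<bar>" by simp
  have e: "\<bar>x\<bar> powr 2 = x\<^sup>2" using x0 by (simp add: powr_numeral)
  have "\<bar>x\<bar> powr q = \<bar>x\<bar> powr (2 * (q / 2))" by simp
  also have "\<dots> = (\<bar>x\<bar> powr 2) powr (q / 2)" by (rule powr_powr[symmetric])
  also have "\<dots> = (x\<^sup>2) powr (q / 2)" by (simp only: e)
  also have "\<dots> \<le> (1 + x\<^sup>2) powr (q / 2)" using assms by (intro powr_mono2) auto
  finally show ?thesis by (simp add: Vf_def)
qed

lemma tail_pointwise: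
  assumes M: "1 \<le> M" and pq: "p < q" and p: "0 \<le> p" and x: "M < \<bar>x\<bar>"
  shows "1 + \<bar>x\<bar> powr p \<le> 2 * M powr (- (q - p)) * Vf (q / 2) x"
proof -
  have x1: "1 < \<bar>x\<bar>" using M x by simp
  have "1 \<le> \<bar>x\<bar> powr p" using x1 p by (simp add: ge_one_powr_ge_zero)
  have "\<bar>x\<bar> powr p = \<bar>x\<bar> powr (- (q - p)) * \<bar>x\<bar> powr q"
    using powr_add[of "\<bar>x\<bar>" "- (q - p)" q] by simp
  also have "\<dots> \<le> M powr (- (q - p)) * Vf (q / 2) x"
  proof (intro mult_mono)
    show "\<bar>x\<bar> powr (- (q - p)) \<le> M powr (- (q - p))" using pq M x by (intro powr_mono2') auto
    show "\<bar>x\<bar> powr q \<le> Vf (q / 2) x" using absq_le_V pq p by simp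
  qed auto
  finally have "\<bar>x\<bar> powr p \<le> M powr (- (q - p)) * Vf (q / 2) x" .
  with \<open>1 \<le> \<bar>x\<bar> powr p\<close> show ?thesis by linarith
qed

lemma subseq_contra:
  fixes A :: "nat \<Rightarrow> real"
  assumes H: "\<And>(r::nat \<Rightarrow> nat) \<epsilon>. strict_mono r \<Longrightarrow> (\<forall>n. \<epsilon> \<le> \<bar>A (r n) - L\<bar>) \<Longrightarrow> 0 < \<epsilon> \<Longrightarrow> False"
  shows "A \<longlonglongrightarrow> L"
proof (rule LIMSEQ_I)
  fix \<epsilon> :: real assume e: "0 < \<epsilon>"
  show "\<exists>N. \<forall>n\<ge>N. norm (A n - L) < \<epsilon>"
  proof (rule ccontr)
    assume "\<not> (\<exists>N. \<forall>n\<ge>N. norm (A n - L) < \<epsilon>)"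
    then have "\<forall>N. \<exists>n\<ge>N. \<epsilon> \<le> \<bar>A n - L\<bar>" by (auto simp: not_less)
    then have "infinite {n. \<epsilon> \<le> \<bar>A n - L\<bar>}"
      by (simp add: infinite_nat_iff_unbounded_le)
    from infinite_enumerate[OF this] obtain r :: "nat \<Rightarrow> nat" where
      "strict_mono r" "\<forall>n. r n \<in> {n. \<epsilon> \<le> \<bar>A n - L\<bar>}" by blast
    then show False using H[of r] e by auto
  qed
qed

lemma mainTheorem6_aux:
  fixes T p q r c1 :: real and Ob :: "real set" and m0 :: "real measure"
    and b \<sigma> :: "real \<Rightarrow> real \<Rightarrow> real"
    and \<mu>s :: "nat \<Rightarrow> (real \<times> real) measure" and ms :: "nat \<Rightarrow> real \<Rightarrow> real measure"
    and \<mu> :: "(real \<times> real) measure" and m :: "real \<Rightarrow> real measure"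
  assumes T_pos: "T > 0" and O_open: "open Ob"
    and r_range: "0 \<le> r" "r \<le> 2" and q_ge: "q \<ge> 2" and pq: "q > p" and p_ge: "p \<ge> max 1 r"
    and S1: "prob_space m0" "sets m0 = sets borel" "emeasure m0 (UNIV - closure Ob) = 0"
            "integrable m0 (\<lambda>x. \<bar>x\<bar> powr q)"
    and S2_meas: "(\<lambda>z. b (fst z) (snd z)) \<in> borel_measurable (restrict_space borel ({0..T} \<times> UNIV))"
                 "(\<lambda>z. \<sigma> (fst z) (snd z)) \<in> borel_measurable (restrict_space borel ({0..T} \<times> UNIV))"
    and S2_cont: "\<forall>t\<in>{0..T}. continuous_on UNIV (b t) \<and> continuous_on UNIV (\<sigma> t)"
    and S2_lip: "\<forall>t\<in>{0..T}. \<forall>x y. \<bar>b t x - b t y\<bar> + \<bar>\<sigma> t x - \<sigma> t y\<bar> \<le> c1 * \<bar>x - y\<bar>"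
    and S2_growth: "\<forall>t\<in>{0..T}. \<forall>x. \<bar>b t x\<bar> \<le> c1 * (1 + \<bar>x\<bar>)"
                   "\<forall>t\<in>{0..T}. \<forall>x. (\<sigma> t x)\<^sup>2 \<le> c1 * (1 + mpow \<bar>x\<bar> r)"
    and S4: "(\<exists>(M::'w measure) F X. mp_solution T b \<sigma> m0 M F X
                 \<and> (AE \<omega> in M. \<forall>t\<in>{0..<T}. X \<omega> t \<in> Ob))
           \<or> ((\<exists>a c. a < c \<and> Ob = {a<..<c})
               \<and> (\<exists>c\<sigma>>0. \<forall>t\<in>{0..T}. \<forall>x. (\<sigma> t x)\<^sup>2 \<ge> c\<sigma>))"
    and in_R: "\<forall>n. inR p T Ob m0 b \<sigma> (\<mu>s n) (ms n)" "inR p T Ob m0 b \<sigma> \<mu> m"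
    and conv_mu: "conv_tau_p p ({0..T} \<times> closure Ob) \<mu>s \<mu>"
    and conv_m: "conv_in_measure p T (closure Ob) ms m"
  shows "conv_stable p T (closure Ob) ms m"
proof -
  define S where "S = closure Ob"
  have cl: "closed S" by (simp add: S_def)
  have c1: "0 \<le> c1"
  proof -
    have "0 \<in> {0..T}" using T_pos by simp
    then have "\<bar>b 0 1 - b 0 0\<bar> + \<bar>\<sigma> 0 1 - \<sigma> 0 0\<bar> \<le> c1 * \<bar>1 - 0\<bar>" using S2_lip by blast
    then show ?thesis by simp
  qed
  have p1: "1 \<le> p" "r \<le> p" "0 \<le> p" "p < q" using p_ge pq by auto
  define Kmom where "Kmom = exp ((c1 * (2 * (q / 2) + 4 * (q / 2)\<^sup>2) + 1) * T) * (2 powr (q / 2) * (1 + (LINT x|m0. \<bar>x\<bar> powr q)))"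
  have Kmom: "0 \<le> Kmom"
  proof -
    have "0 \<le> (LINT x|m0. \<bar>x\<bar> powr q)" by (rule integral_nonneg_AE) auto
    then show ?thesis by (simp add: Kmom_def)
  qed
  have mb: "(\<integral>\<^sup>+t. indicator {0..T} t * (\<integral>\<^sup>+x. indicator S x * ennreal (Vf (q / 2) x) \<partial>m' t) \<partial>lborel) \<le> ennreal Kmom"
    if "inR p T Ob m0 b \<sigma> \<mu>' m'" for \<mu>' m'
    using moment_bound[OF T_pos q_ge r_range p_ge c1 S1(1,2,4) S2_meas S2_growth that] by (simp add: Kmom_def S_def)
  have Vpn: "Vp p T S (ms n)" for n using in_R(1) by (simp add: inR_def S_def)
  have Vpm: "Vp p T S m" using in_R(2) by (simp add: inR_def S_def)
  have Vm: "Vf (q / 2) \<in> borel_measurable borel" using cont_Vf by (rule borel_measurable_continuous_onI)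
  have "conv_stable p T S ms m"
    unfolding conv_stable_def
  proof (intro allI impI, elim conjE)
    fix \<phi> :: "real \<times> real \<Rightarrow> real" and C :: real
    assume \<phi>m: "\<phi> \<in> borel_measurable (restrict_space borel ({0..T} \<times> S))"
      and \<phi>c: "\<forall>t\<in>{0..T}. continuous_on S (\<lambda>x. \<phi> (t, x))"
      and \<phi>g: "\<forall>t\<in>{0..T}. \<forall>x\<in>S. \<bar>\<phi> (t, x)\<bar> \<le> C * (1 + \<bar>x\<bar> powr p)"
    have \<phi>gx: "\<bar>\<phi> (t, x)\<bar> \<le> C * (1 + \<bar>x\<bar> powr p)" if "t \<in> {0..T}" "x \<in> S" for t x
      using \<phi>g that by blast
    define A where "A n = (LINT t:{0..T}|lborel. (LINT x:S|ms n t. \<phi> (t,x)))" for n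
    define Ainf where "Ainf = (LINT t:{0..T}|lborel. (LINT x:S|m t. \<phi> (t,x)))"
    have "A \<longlonglongrightarrow> Ainf"
    proof (rule subseq_contra)
      fix r :: "nat \<Rightarrow> nat" and \<epsilon> :: real
      assume r: "strict_mono r" and far: "\<forall>n. \<epsilon> \<le> \<bar>A (r n) - Ainf\<bar>" and \<epsilon>: "0 < \<epsilon>"
      from conv_m r obtain r' :: "nat \<Rightarrow> nat" where r': "strict_mono r'"
        and ae: "AE t in lborel. t \<in> {0..T} \<longrightarrow> conv_tau_p p S (\<lambda>k. ms (r (r' k)) t) (m t)"
        unfolding conv_in_measure_def S_def by blast
      have fl: "filterlim (\<lambda>n. 1 + real n) at_top sequentially"
        by (rule filterlim_tendsto_add_at_top[OF tendsto_const filterlim_real_sequentially])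
      have "(\<lambda>n. (1 + real n) powr (- (q - p))) \<longlonglongrightarrow> 0"
        using p1 by (intro tendsto_neg_powr fl) auto
      then have "(\<lambda>n. 2 * \<bar>C\<bar> * (1 + real n) powr (- (q - p)) * Kmom) \<longlonglongrightarrow> 2 * \<bar>C\<bar> * 0 * Kmom"
        by (intro tendsto_intros)
      then have "eventually (\<lambda>n. 2 * \<bar>C\<bar> * (1 + real n) powr (- (q - p)) * Kmom < \<epsilon> / 3) sequentially"
        using \<epsilon> by (intro order_tendstoD(2)) auto
      then obtain N where N: "2 * \<bar>C\<bar> * (1 + real N) powr (- (q - p)) * Kmom < \<epsilon> / 3"
        by (auto simp: eventually_sequentially)
      define M where "M = 1 + real N"
      have M: "1 \<le> M" by (simp add: M_def)
      define cM where "cM = 2 * \<bar>C\<bar> * M powr (- (q - p))"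
      have cM: "0 \<le> cM" "cM * Kmom < \<epsilon> / 3" using N by (auto simp: cM_def M_def)
      define chi where "chi x = max 0 (min 1 (M + 1 - \<bar>x\<bar>))" for x :: real
      have chi: "0 \<le> chi x" "chi x \<le> 1" for x by (auto simp: chi_def)
      have chi1: "\<bar>x\<bar> \<le> M \<Longrightarrow> chi x = 1" for x by (auto simp: chi_def)
      have chi0: "M + 1 \<le> \<bar>x\<bar> \<Longrightarrow> chi x = 0" for x by (auto simp: chi_def)
      have chic: "continuous_on UNIV chi" unfolding chi_def[abs_def] by (intro continuous_intros)
      define \<phi>M where "\<phi>M z = \<phi> z * chi (snd z)" for z
      define \<rho>M where "\<rho>M z = \<phi> z - \<phi>M z" for z
      have chim: "(\<lambda>z::real\<times>real. chi (snd z)) \<in> borel_measurable (restrict_space borel ({0..T} \<times> S))"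
        by (intro cont_meas_restrict cont_comp[OF chic] continuous_intros)
      have \<phi>Mm: "\<phi>M \<in> borel_measurable (restrict_space borel ({0..T} \<times> S))"
        unfolding \<phi>M_def[abs_def] using \<phi>m chim by measurable
      have \<rho>Mm: "\<rho>M \<in> borel_measurable (restrict_space borel ({0..T} \<times> S))"
        unfolding \<rho>M_def[abs_def] using \<phi>m \<phi>Mm by measurable
      have \<phi>Mg: "\<forall>t\<in>{0..T}. \<forall>x\<in>S. \<bar>\<phi>M (t, x)\<bar> \<le> C * (1 + \<bar>x\<bar> powr p)"
      proof (intro ballI)
        fix t x assume t: "t \<in> {0..T}" and x: "x \<in> S"
        have "\<bar>\<phi>M (t, x)\<bar> = \<bar>\<phi> (t,x)\<bar> * chi x" using chi[of x] by (simp add: \<phi>M_def abs_mult)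
        also have "\<dots> \<le> \<bar>\<phi> (t,x)\<bar> * 1" using chi[of x] by (intro mult_left_mono) auto
        finally show "\<bar>\<phi>M (t, x)\<bar> \<le> C * (1 + \<bar>x\<bar> powr p)" using \<phi>gx[OF t x] by linarith
      qed
      have \<rho>abs: "\<bar>\<rho>M (t, x)\<bar> = \<bar>\<phi> (t,x)\<bar> * (1 - chi x)" for t x
      proof -
        have "\<rho>M (t, x) = \<phi> (t,x) * (1 - chi x)" by (simp add: \<rho>M_def \<phi>M_def algebra_simps)
        then have "\<bar>\<rho>M (t, x)\<bar> = \<bar>\<phi> (t,x)\<bar> * \<bar>1 - chi x\<bar>" by (simp add: abs_mult)
        then show ?thesis using chi[of x] by simp
      qed
      have \<rho>Mg: "\<forall>t\<in>{0..T}. \<forall>x\<in>S. \<bar>\<rho>M (t, x)\<bar> \<le> C * (1 + \<bar>x\<bar> powr p)"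
      proof (intro ballI)
        fix t x assume t: "t \<in> {0..T}" and x: "x \<in> S"
        have "\<bar>\<rho>M (t, x)\<bar> \<le> \<bar>\<phi> (t,x)\<bar> * 1" unfolding \<rho>abs using chi[of x] by (intro mult_left_mono) auto
        then show "\<bar>\<rho>M (t, x)\<bar> \<le> C * (1 + \<bar>x\<bar> powr p)" using \<phi>gx[OF t x] by linarith
      qed
      have \<rho>t: "\<forall>t\<in>{0..T}. \<forall>x\<in>S. \<bar>\<rho>M (t, x)\<bar> \<le> cM * Vf (q / 2) x"
      proof (intro ballI)
        fix t x assume t: "t \<in> {0..T}" and x: "x \<in> S"
        show "\<bar>\<rho>M (t, x)\<bar> \<le> cM * Vf (q / 2) x"
        proof (cases "\<bar>x\<bar> \<le> M")
          case True
          then have "\<bar>\<rho>M (t, x)\<bar> = 0" unfolding \<rho>abs using chi1 by simp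
          moreover have "0 \<le> cM * Vf (q / 2) x" using cM Vf_ge1[of "q/2" x] q_ge by simp
          ultimately show ?thesis by simp
        next
          case False
          have "\<bar>\<rho>M (t, x)\<bar> \<le> \<bar>\<phi> (t,x)\<bar> * 1" unfolding \<rho>abs using chi[of x] by (intro mult_left_mono) auto
          also have "\<dots> \<le> C * (1 + \<bar>x\<bar> powr p)" using \<phi>gx[OF t x] by linarith
          also have "\<dots> \<le> \<bar>C\<bar> * (1 + \<bar>x\<bar> powr p)" by (intro mult_right_mono) auto
          also have "\<dots> \<le> \<bar>C\<bar> * (2 * M powr (- (q - p)) * Vf (q / 2) x)"
            using tail_pointwise[OF M p1(4) p1(3)] False by (intro mult_left_mono) auto
          also have "\<dots> = cM * Vf (q / 2) x" by (simp add: cM_def)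
          finally show ?thesis .
        qed
      qed
      define BM where "BM = \<bar>C\<bar> * (1 + (M + 1) powr p)"
      have BM: "0 \<le> BM" by (simp add: BM_def)
      have \<phi>Mb: "\<forall>x\<in>S. \<bar>\<phi>M (t, x)\<bar> \<le> BM" if t: "t \<in> {0..T}" for t
      proof
        fix x assume x: "x \<in> S"
        show "\<bar>\<phi>M (t, x)\<bar> \<le> BM"
        proof (cases "M + 1 \<le> \<bar>x\<bar>")
          case True then show ?thesis using chi0 BM by (simp add: \<phi>M_def)
        next
          case False
          have "\<bar>\<phi>M (t, x)\<bar> \<le> C * (1 + \<bar>x\<bar> powr p)" using \<phi>Mg t x by blast
          also have "\<dots> \<le> \<bar>C\<bar> * (1 + \<bar>x\<bar> powr p)" by (intro mult_right_mono) auto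
          also have "\<dots> \<le> \<bar>C\<bar> * (1 + (M + 1) powr p)"
            using False p1 by (intro mult_left_mono add_left_mono powr_mono2) auto
          finally show ?thesis by (simp add: BM_def)
        qed
      qed
      have split: "(LINT t:{0..T}|lborel. (LINT x:S|m' t. \<phi> (t,x)))
          = (LINT t:{0..T}|lborel. (LINT x:S|m' t. \<phi>M (t,x))) + (LINT t:{0..T}|lborel. (LINT x:S|m' t. \<rho>M (t,x)))"
        if "Vp p T S m'" for m'
        using outer_split[OF that cl \<phi>Mm \<rho>Mm \<phi>Mg \<rho>Mg] by (simp add: \<rho>M_def)
      have tail: "\<bar>LINT t:{0..T}|lborel. (LINT x:S|m' t. \<rho>M (t,x))\<bar> \<le> cM * Kmom"
        if "inR p T Ob m0 b \<sigma> \<mu>' m'" for \<mu>' m'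
      proof -
        have "Vp p T S m'" using that by (simp add: inR_def S_def)
        then show ?thesis by (rule outer_tail[OF _ cl Vm \<rho>t cM(1) Kmom mb[OF that]])
      qed
      define s where "s k = r (r' k)" for k
      have dct: "(\<lambda>k. LINT t:{0..T}|lborel. (LINT x:S|ms (s k) t. \<phi>M (t,x)))
          \<longlonglongrightarrow> (LINT t:{0..T}|lborel. (LINT x:S|m t. \<phi>M (t,x)))"
        unfolding set_lebesgue_integral_def[of lborel "{0..T}"]
      proof (rule integral_dominated_convergence[where w="\<lambda>t. BM * indicator {0..T} t"])
        show "(\<lambda>t. indicator {0..T} t *\<^sub>R (LINT x:S|m t. \<phi>M (t,x))) \<in> borel_measurable lborel"
          using inner_meas[OF Vpm \<phi>Mm cl] by simp
        show "(\<lambda>t. indicator {0..T} t *\<^sub>R (LINT x:S|ms (s k) t. \<phi>M (t,x))) \<in> borel_measurable lborel" for k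
          using inner_meas[OF Vpn \<phi>Mm cl] by simp
        show "integrable lborel (\<lambda>t. BM * indicator {0..T} t)"
          by (rule borel_integrable_atLeastAtMost) auto
        show "AE t in lborel. (\<lambda>k. indicator {0..T} t *\<^sub>R (LINT x:S|ms (s k) t. \<phi>M (t,x)))
            \<longlonglongrightarrow> indicator {0..T} t *\<^sub>R (LINT x:S|m t. \<phi>M (t,x))"
          using ae
        proof eventually_elim
          case (elim t)
          show ?case
          proof (cases "t \<in> {0..T}")
            case t: True
            then have ct: "conv_tau_p p S (\<lambda>k. ms (s k) t) (m t)" using elim by (simp add: s_def)
            have cont: "continuous_on S (\<lambda>x. \<phi>M (t, x))"
              unfolding \<phi>M_def using \<phi>c t
              by (auto intro!: continuous_intros cont_comp[OF chic])
            have gr: "\<forall>z\<in>S. \<bar>\<phi>M (t, z)\<bar> \<le> C * (1 + norm z powr p)" using \<phi>Mg t by simp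
            have "(\<lambda>k. LINT x:S|ms (s k) t. \<phi>M (t,x)) \<longlonglongrightarrow> (LINT x:S|m t. \<phi>M (t,x))"
              using ct cont gr unfolding conv_tau_p_def by blast
            then show ?thesis using t by simp
          qed simp
        qed
        show "AE t in lborel. norm (indicator {0..T} t *\<^sub>R (LINT x:S|ms (s k) t. \<phi>M (t,x))) \<le> BM * indicator {0..T} t" for k
        proof (rule AE_I2)
          fix t show "norm (indicator {0..T} t *\<^sub>R (LINT x:S|ms (s k) t. \<phi>M (t,x))) \<le> BM * indicator {0..T} t"
            using inner_const_bound[OF Vpn _ BM \<phi>Mb, of t "s k"] by (cases "t \<in> {0..T}") auto
        qed
      qed
      then have dct': "(\<lambda>k. LINT t:{0..T}|lborel. (LINT x:S|ms (s k) t. \<phi>M (t,x)))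
          \<longlonglongrightarrow> (LINT t:{0..T}|lborel. (LINT x:S|m t. \<phi>M (t,x)))"
        by (simp add: set_lebesgue_integral_def)
      have "\<epsilon> / 3 > 0" using \<epsilon> by simp
      from LIMSEQ_D[OF dct' this] obtain k0 where
        k0: "norm ((LINT t:{0..T}|lborel. (LINT x:S|ms (s k0) t. \<phi>M (t,x))) - (LINT t:{0..T}|lborel. (LINT x:S|m t. \<phi>M (t,x)))) < \<epsilon> / 3"
        by blast
      have e1: "A (s k0) = (LINT t:{0..T}|lborel. (LINT x:S|ms (s k0) t. \<phi>M (t,x))) + (LINT t:{0..T}|lborel. (LINT x:S|ms (s k0) t. \<rho>M (t,x)))"
        unfolding A_def by (rule split[OF Vpn])
      have e2: "Ainf = (LINT t:{0..T}|lborel. (LINT x:S|m t. \<phi>M (t,x))) + (LINT t:{0..T}|lborel. (LINT x:S|m t. \<rho>M (t,x)))"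
        unfolding Ainf_def by (rule split[OF Vpm])
      have t1: "\<bar>LINT t:{0..T}|lborel. (LINT x:S|ms (s k0) t. \<rho>M (t,x))\<bar> \<le> cM * Kmom"
        using tail in_R(1) by blast
      have t2: "\<bar>LINT t:{0..T}|lborel. (LINT x:S|m t. \<rho>M (t,x))\<bar> \<le> cM * Kmom"
        using tail in_R(2) by blast
      have fin: "\<bar>a1 + b1 - (c1' + d1)\<bar> < \<epsilon>"
        if "\<bar>a1 - c1'\<bar> < \<epsilon> / 3" "\<bar>b1\<bar> \<le> k" "\<bar>d1\<bar> \<le> k" "k < \<epsilon> / 3" for a1 b1 c1' d1 k :: real
      proof -
        have "\<bar>a1 + b1 - (c1' + d1)\<bar> = \<bar>(a1 - c1') + (b1 - d1)\<bar>" by (simp add: algebra_simps)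
        also have "\<dots> \<le> \<bar>a1 - c1'\<bar> + \<bar>b1 - d1\<bar>" by (rule abs_triangle_ineq)
        also have "\<bar>b1 - d1\<bar> \<le> \<bar>b1\<bar> + \<bar>d1\<bar>" by (rule abs_triangle_ineq4)
        finally show ?thesis using that by linarith
      qed
      have "\<bar>A (s k0) - Ainf\<bar> < \<epsilon>" unfolding e1 e2
        by (rule fin[OF _ t1 t2]) (use k0 cM in auto)
      moreover have "\<epsilon> \<le> \<bar>A (s k0) - Ainf\<bar>" using far by (simp add: s_def)
      ultimately show False by simp
    qed
    then show "(\<lambda>n. LINT t:{0..T}|lborel. (LINT x:S|ms n t. \<phi> (t, x))) \<longlonglongrightarrow> (LINT t:{0..T}|lborel. (LINT x:S|m t. \<phi> (t, x)))"
      by (simp add: A_def[abs_def] Ainf_def)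
  qed
  then show ?thesis by (simp add: S_def)
qed


theorem mainTheorem6:
  fixes T p q r c1 :: real and Ob :: "real set" and m0 :: "real measure"
    and b \<sigma> :: "real \<Rightarrow> real \<Rightarrow> real"
    and \<mu>s :: "nat \<Rightarrow> (real \<times> real) measure" and ms :: "nat \<Rightarrow> real \<Rightarrow> real measure"
    and \<mu> :: "(real \<times> real) measure" and m :: "real \<Rightarrow> real measure"
  assumes T_pos: "T > 0" and O_open: "open Ob"
    and r_range: "0 \<le> r" "r \<le> 2" and q_ge: "q \<ge> 2" and pq: "q > p" and p_ge: "p \<ge> max 1 r"
    and S1: "prob_space m0" "sets m0 = sets borel" "emeasure m0 (UNIV - closure Ob) = 0"
            "integrable m0 (\<lambda>x. \<bar>x\<bar> powr q)"
    and S2_meas: "(\<lambda>z. b (fst z) (snd z)) \<in> borel_measurable (restrict_space borel ({0..T} \<times> UNIV))"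
                 "(\<lambda>z. \<sigma> (fst z) (snd z)) \<in> borel_measurable (restrict_space borel ({0..T} \<times> UNIV))"
    and S2_cont: "\<forall>t\<in>{0..T}. continuous_on UNIV (b t) \<and> continuous_on UNIV (\<sigma> t)"
    and S2_lip: "\<forall>t\<in>{0..T}. \<forall>x y. \<bar>b t x - b t y\<bar> + \<bar>\<sigma> t x - \<sigma> t y\<bar> \<le> c1 * \<bar>x - y\<bar>"
    and S2_growth: "\<forall>t\<in>{0..T}. \<forall>x. \<bar>b t x\<bar> \<le> c1 * (1 + \<bar>x\<bar>)"
                   "\<forall>t\<in>{0..T}. \<forall>x. (\<sigma> t x)\<^sup>2 \<le> c1 * (1 + mpow \<bar>x\<bar> r)"
    and S4: "(\<exists>(M::'w measure) F X. mp_solution T b \<sigma> m0 M F X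
                 \<and> (AE \<omega> in M. \<forall>t\<in>{0..<T}. X \<omega> t \<in> Ob))
           \<or> ((\<exists>a c. a < c \<and> Ob = {a<..<c})
               \<and> (\<exists>c\<sigma>>0. \<forall>t\<in>{0..T}. \<forall>x. (\<sigma> t x)\<^sup>2 \<ge> c\<sigma>))"
    and in_R: "\<forall>n. inR p T Ob m0 b \<sigma> (\<mu>s n) (ms n)" "inR p T Ob m0 b \<sigma> \<mu> m"
    and conv_mu: "conv_tau_p p ({0..T} \<times> closure Ob) \<mu>s \<mu>"
    and conv_m: "conv_in_measure p T (closure Ob) ms m"
  shows "conv_tau_p p ({0..T} \<times> closure Ob) \<mu>s \<mu> \<and> conv_stable p T (closure Ob) ms m"
  using mainTheorem6_aux[OF T_pos O_open r_range q_ge pq p_ge S1 S2_meas S2_cont S2_lip S2_growth S4 in_R conv_mu conv_m]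
    conv_mu by blast

thm_deps mainTheorem6

end
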